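(* Let $Y$ be a complex Banach space and $U:\mathcal B(\mathcal H)\to Y$ a non-null bounded linear operator with $\|U\|<\lambda$. Then for every $n\in\mathbb N$, $$AP_\lambda(B_{\ell_1^n},1,U)=\frac{R_\lambda(\mathbb D,1,U)}{n}.$$
   Context: $\mathcal B(\mathcal H)$: bounded operators on a complex Hilbert space; $\mathbb D$ the open unit disc; $B_{\ell_1^n}$ the open unit ball of $\ell_1^n$. Bounded pluriharmonic $f:\Omega\to\mathcal B(\mathcal H)$ are written $f(z)=\sum_\alpha a_\alpha z^\alpha+\sum_{|\alpha|\ge1}b_\alpha^*\bar z^\alpha$ ($b_0=0$), $\|f\|_\Omega=\sup\|f(z)\|$. $R_\lambda(\Omega,1,U)$: supremum of $r\ge0$ with $\sup_{z\in r\Omega}\sum_\alpha(\|U(a_\alpha)\|+\|U(b_\alpha)\|)|z^\alpha|\le\lambda\|f\|_\Omega$ for all such $f$. $AP_\lambda(\Omega,1,U)$ ($\Omega\subset\mathbb C^n$): supremum of $\frac1n\sum r_i$ over $r\in\mathbb R^n_{\ge0}$ with $\sum_\alpha(\|U(a_\alpha)\|+\|U(b_\alpha)\|)r^{\alpha}\le\lambda\|f\|_\Omega$ for all such $f$. *)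

theory Defs
  imports "HOL-Analysis.Analysis"
begin

text \<open>The distribution has no complex vector space classes, so we introduce them:
a complex normed space is a real normed space with a compatible complex scalar
multiplication; a complex Hilbert space is a complete one whose norm comes from a
complex inner product (linear in the second argument).\<close>

class cnormed = real_normed_vector +
  fixes scaleC :: "complex \<Rightarrow> 'a \<Rightarrow> 'a" (infixr \<open>*\<^sub>C\<close> 75)
  assumes scaleC_add_right: "a *\<^sub>C (x + y) = a *\<^sub>C x + a *\<^sub>C y"
    and scaleC_add_left: "(a + b) *\<^sub>C x = a *\<^sub>C x + b *\<^sub>C x"
    and scaleC_scaleC: "a *\<^sub>C (b *\<^sub>C x) = (a * b) *\<^sub>C x"
    and scaleC_one: "1 *\<^sub>C x = x"
    and scaleR_scaleC: "scaleR r x = complex_of_real r *\<^sub>C x"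
    and norm_scaleC: "norm (a *\<^sub>C x) = cmod a * norm x"

class chilbert = cnormed + complete_space +
  fixes cinner :: "'a \<Rightarrow> 'a \<Rightarrow> complex"
  assumes cinner_conj_sym: "cinner x y = cnj (cinner y x)"
    and cinner_add_right: "cinner x (y + z) = cinner x y + cinner x z"
    and cinner_scaleC_right: "cinner x (a *\<^sub>C y) = a * cinner x y"
    and cinner_self_norm: "cinner x x = complex_of_real ((norm x)\<^sup>2)"

instantiation complex :: chilbert
begin
definition scaleC_complex :: "complex \<Rightarrow> complex \<Rightarrow> complex" where "scaleC_complex a x = a * x"
definition cinner_complex :: "complex \<Rightarrow> complex \<Rightarrow> complex" where "cinner_complex x y = cnj x * y"
instance
proof
  fix a b :: complex and x y z :: complex and r :: real
  show "a *\<^sub>C (x + y) = a *\<^sub>C x + a *\<^sub>C y" by (simp add: scaleC_complex_def distrib_left)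
  show "(a + b) *\<^sub>C x = a *\<^sub>C x + b *\<^sub>C x" by (simp add: scaleC_complex_def distrib_right)
  show "a *\<^sub>C (b *\<^sub>C x) = (a * b) *\<^sub>C x" by (simp add: scaleC_complex_def mult.assoc)
  show "1 *\<^sub>C x = x" by (simp add: scaleC_complex_def)
  show "scaleR r x = complex_of_real r *\<^sub>C x" by (simp add: scaleC_complex_def scaleR_conv_of_real)
  show "norm (a *\<^sub>C x) = cmod a * norm x" by (simp add: scaleC_complex_def norm_mult)
  show "cinner x y = cnj (cinner y x)" by (simp add: cinner_complex_def mult.commute)
  show "cinner x (y + z) = cinner x y + cinner x z" by (simp add: cinner_complex_def distrib_left)
  show "cinner x (a *\<^sub>C y) = a * cinner x y" by (simp add: cinner_complex_def scaleC_complex_def mult.left_commute)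
  show "cinner x x = complex_of_real ((norm x)\<^sup>2)" using complex_norm_square[of x] by (simp add: cinner_complex_def mult.commute)
qed
end

text \<open>Elements of B(H): bounded complex-linear maps H \<Rightarrow> H; the norm is the operator norm onorm.\<close>
definition bop :: "('h::cnormed \<Rightarrow> 'h) \<Rightarrow> bool" where
  "bop T \<longleftrightarrow> (\<forall>x y. T (x + y) = T x + T y) \<and> (\<forall>c x. T (c *\<^sub>C x) = c *\<^sub>C T x)
      \<and> (\<exists>K. \<forall>x. norm (T x) \<le> norm x * K)"

definition adj :: "('h::chilbert \<Rightarrow> 'h) \<Rightarrow> 'h \<Rightarrow> 'h" where
  "adj T = (SOME S. \<forall>x y. cinner (T x) y = cinner x (S y))"

definition op_linear :: "(('h::cnormed \<Rightarrow> 'h) \<Rightarrow> 'y::cnormed) \<Rightarrow> bool" where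
  "op_linear U \<longleftrightarrow>
     (\<forall>S T. bop S \<longrightarrow> bop T \<longrightarrow> U (\<lambda>x. S x + T x) = U S + U T) \<and>
     (\<forall>c T. bop T \<longrightarrow> U (\<lambda>x. c *\<^sub>C T x) = c *\<^sub>C U T)"

definition op_bounded :: "(('h::cnormed \<Rightarrow> 'h) \<Rightarrow> 'y::cnormed) \<Rightarrow> bool" where
  "op_bounded U \<longleftrightarrow> (\<exists>K. \<forall>T. bop T \<longrightarrow> norm (U T) \<le> K * onorm T)"

definition op_norm :: "(('h::cnormed \<Rightarrow> 'h) \<Rightarrow> 'y::cnormed) \<Rightarrow> real" where
  "op_norm U = (SUP T\<in>{T. bop T \<and> onorm T \<le> 1}. norm (U T))"

text \<open>Points of C^n are functions nat \<Rightarrow> complex (coordinates 0..n-1);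
multi-indices in N^n are functions nat \<Rightarrow> nat vanishing from n on.\<close>
definition multi_idx :: "nat \<Rightarrow> (nat \<Rightarrow> nat) set" where
  "multi_idx n = {\<alpha>. \<forall>i\<ge>n. \<alpha> i = 0}"

definition mpow :: "nat \<Rightarrow> (nat \<Rightarrow> 'a::comm_ring_1) \<Rightarrow> (nat \<Rightarrow> nat) \<Rightarrow> 'a" where
  "mpow n z \<alpha> = (\<Prod>i<n. z i ^ \<alpha> i)"

definition ball_l1 :: "nat \<Rightarrow> (nat \<Rightarrow> complex) set" where
  "ball_l1 n = {z. (\<forall>i\<ge>n. z i = 0) \<and> (\<Sum>i<n. cmod (z i)) < 1}"

definition unit_disc :: "(nat \<Rightarrow> complex) set" where
  "unit_disc = {z. (\<forall>i\<ge>1. z i = 0) \<and> cmod (z 0) < 1}"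

definition scale_set :: "real \<Rightarrow> (nat \<Rightarrow> complex) set \<Rightarrow> (nat \<Rightarrow> complex) set" where
  "scale_set r \<Omega> = (\<lambda>z i. complex_of_real r * z i) ` \<Omega>"

definition ph_eval :: "nat \<Rightarrow> ((nat \<Rightarrow> nat) \<Rightarrow> 'h::chilbert \<Rightarrow> 'h) \<Rightarrow> ((nat \<Rightarrow> nat) \<Rightarrow> 'h \<Rightarrow> 'h)
    \<Rightarrow> (nat \<Rightarrow> complex) \<Rightarrow> 'h \<Rightarrow> 'h" where
  "ph_eval n a b z = (\<lambda>x. \<Sum>\<^sub>\<infinity>\<alpha>\<in>multi_idx n.
      mpow n z \<alpha> *\<^sub>C a \<alpha> x + cnj (mpow n z \<alpha>) *\<^sub>C adj (b \<alpha>) x)"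

text \<open>(a, b) are the coefficients of a bounded pluriharmonic f : \<Omega> \<rightarrow> B(H) on the
complete Reinhardt domain \<Omega>: coefficients in B(H), b_0 = 0, the expansion converging
(absolutely, in operator norm) at every point of \<Omega>, and f bounded on \<Omega>.\<close>
definition ph_series :: "nat \<Rightarrow> (nat \<Rightarrow> complex) set \<Rightarrow> ((nat \<Rightarrow> nat) \<Rightarrow> 'h::chilbert \<Rightarrow> 'h)
    \<Rightarrow> ((nat \<Rightarrow> nat) \<Rightarrow> 'h \<Rightarrow> 'h) \<Rightarrow> bool" where
  "ph_series n \<Omega> a b \<longleftrightarrow>
     (\<forall>\<alpha>\<in>multi_idx n. bop (a \<alpha>) \<and> bop (b \<alpha>)) \<and> b (\<lambda>_. 0) = (\<lambda>x. 0) \<and>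
     (\<forall>z\<in>\<Omega>. (\<lambda>\<alpha>. (onorm (a \<alpha>) + onorm (b \<alpha>)) * norm (mpow n z \<alpha>)) summable_on multi_idx n) \<and>
     bdd_above ((\<lambda>z. onorm (ph_eval n a b z :: 'h \<Rightarrow> 'h)) ` \<Omega>)"

definition ph_norm :: "nat \<Rightarrow> (nat \<Rightarrow> complex) set \<Rightarrow> ((nat \<Rightarrow> nat) \<Rightarrow> 'h::chilbert \<Rightarrow> 'h)
    \<Rightarrow> ((nat \<Rightarrow> nat) \<Rightarrow> 'h \<Rightarrow> 'h) \<Rightarrow> real" where
  "ph_norm n \<Omega> a b = (SUP z\<in>\<Omega>. onorm (ph_eval n a b z :: 'h \<Rightarrow> 'h))"

text \<open>A series of nonnegative terms has sum \<le> C (sum understood in [0,\<infinity>]).\<close>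
definition nn_sum_le :: "('a \<Rightarrow> real) \<Rightarrow> 'a set \<Rightarrow> real \<Rightarrow> bool" where
  "nn_sum_le g A C \<longleftrightarrow> g summable_on A \<and> (\<Sum>\<^sub>\<infinity>\<alpha>\<in>A. g \<alpha>) \<le> C"

text \<open>R_\<lambda>(\<Omega>,1,U), \<Omega> \<subseteq> C^n.  The supremum over z \<in> r\<Omega> of the majorant series is \<le> \<lambda>||f||
iff each of these series is.\<close>
definition R_lambda :: "real \<Rightarrow> nat \<Rightarrow> (nat \<Rightarrow> complex) set \<Rightarrow> (('h::chilbert \<Rightarrow> 'h) \<Rightarrow> 'y::cnormed) \<Rightarrow> real" where
  "R_lambda lam n \<Omega> U = Sup {r. r \<ge> 0 \<and>
     (\<forall>a b. ph_series n \<Omega> a b \<longrightarrow>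
        (\<forall>z\<in>scale_set r \<Omega>.
           nn_sum_le (\<lambda>\<alpha>. (norm (U (a \<alpha>)) + norm (U (b \<alpha>))) * norm (mpow n z \<alpha>))
             (multi_idx n) (lam * ph_norm n \<Omega> a b)))}"

definition AP_lambda :: "real \<Rightarrow> nat \<Rightarrow> (nat \<Rightarrow> complex) set \<Rightarrow> (('h::chilbert \<Rightarrow> 'h) \<Rightarrow> 'y::cnormed) \<Rightarrow> real" where
  "AP_lambda lam n \<Omega> U = Sup {(\<Sum>i<n. r i) / real n | r. (\<forall>i<n. r i \<ge> 0) \<and>
     (\<forall>a b. ph_series n \<Omega> a b \<longrightarrow>
        nn_sum_le (\<lambda>\<alpha>. (norm (U (a \<alpha>)) + norm (U (b \<alpha>))) * mpow n r \<alpha>)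
          (multi_idx n) (lam * ph_norm n \<Omega> a b))}"

end

theory Submission
  imports Defs
begin

instance chilbert \<subseteq> banach ..

lemma scaleC_zero_left[simp]: "(0::complex) *\<^sub>C (x::'a::cnormed) = 0"
  using norm_scaleC[of 0 x] by simp
lemma scaleC_zero_right[simp]: "(a::complex) *\<^sub>C (0::'a::cnormed) = 0"
  using norm_scaleC[of a "0::'a"] by simp
lemma scaleC_minus_right: "(a::complex) *\<^sub>C (- x::'a::cnormed) = - (a *\<^sub>C x)"
  using scaleC_add_right[of a x "-x"] by (simp add: minus_unique)
lemma scaleC_minus_left: "(- a::complex) *\<^sub>C (x::'a::cnormed) = - (a *\<^sub>C x)"
  using scaleC_add_left[of a "-a" x] by (simp add: minus_unique)
lemma scaleC_diff_right: "(a::complex) *\<^sub>C (x - y::'a::cnormed) = a *\<^sub>C x - a *\<^sub>C y"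
  using scaleC_add_right[of a x "-y"] by (simp add: scaleC_minus_right)
lemma scaleC_diff_left: "(a - b::complex) *\<^sub>C (x::'a::cnormed) = a *\<^sub>C x - b *\<^sub>C x"
  using scaleC_add_left[of a "-b" x] by (simp add: scaleC_minus_left)
lemma scaleC_of_real: "complex_of_real r *\<^sub>C (x::'a::cnormed) = r *\<^sub>R x"
  by (simp add: scaleR_scaleC)
lemma scaleC_sum_left: "(\<Sum>i\<in>I. f i) *\<^sub>C (x::'a::cnormed) = (\<Sum>i\<in>I. f i *\<^sub>C x)"
  by (induction I rule: infinite_finite_induct) (auto simp: scaleC_add_left)
lemma scaleC_sum_right: "(a::complex) *\<^sub>C (\<Sum>i\<in>I. f i) = (\<Sum>i\<in>I. a *\<^sub>C (f i::'a::cnormed))"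
  by (induction I rule: infinite_finite_induct) (auto simp: scaleC_add_right)

lemma cinner_zero_right[simp]: "cinner (x::'a::chilbert) 0 = 0"
  using cinner_add_right[of x 0 0] by simp
lemma cinner_zero_left[simp]: "cinner 0 (x::'a::chilbert) = 0"
  using cinner_conj_sym[of 0 x] by simp
lemma cinner_add_left: "cinner (x + y) (z::'a::chilbert) = cinner x z + cinner y z"
  by (metis cinner_add_right cinner_conj_sym complex_cnj_add)
lemma cinner_scaleC_left: "cinner (a *\<^sub>C x) (y::'a::chilbert) = cnj a * cinner x y"
  by (metis cinner_conj_sym cinner_scaleC_right complex_cnj_mult)
lemma cinner_minus_right: "cinner x (- y::'a::chilbert) = - cinner x y"
  using cinner_add_right[of x y "-y"] by (simp add: minus_unique)
lemma cinner_minus_left: "cinner (- x) (y::'a::chilbert) = - cinner x y"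
  using cinner_add_left[of x "-x" y] by (simp add: minus_unique)
lemma cinner_diff_right: "cinner x (y - z::'a::chilbert) = cinner x y - cinner x z"
  using cinner_add_right[of x y "-z"] by (simp add: cinner_minus_right)
lemma cinner_diff_left: "cinner (x - y) (z::'a::chilbert) = cinner x z - cinner y z"
  using cinner_add_left[of x "-y" z] by (simp add: cinner_minus_left)
lemma norm_sq_cinner: "(norm (x::'a::chilbert))\<^sup>2 = Re (cinner x x)"
  by (simp add: cinner_self_norm)
lemma cinner_self_eq_0: "cinner x x = 0 \<longleftrightarrow> (x::'a::chilbert) = 0"
  by (simp add: cinner_self_norm)

lemma norm_add_sq: "(norm (x + y::'a::chilbert))\<^sup>2 = (norm x)\<^sup>2 + (norm y)\<^sup>2 + 2 * Re (cinner x y)"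
proof -
  have "cinner (x+y) (x+y) = cinner x x + cinner y y + (cinner x y + cnj (cinner x y))"
    by (simp add: cinner_add_left cinner_add_right cinner_conj_sym[of y x])
  hence "Re (cinner (x+y) (x+y)) = Re (cinner x x) + Re (cinner y y) + 2 * Re (cinner x y)"
    by simp
  thus ?thesis by (simp add: norm_sq_cinner)
qed

lemma cauchy_schwarz: "cmod (cinner x y) \<le> norm (x::'a::chilbert) * norm y"
proof (cases "x = 0")
  case True then show ?thesis by simp
next
  case False
  define c where "c = cinner x y"
  define t where "t = c / complex_of_real ((norm x)\<^sup>2)"
  have nx: "norm x > 0" using False by simp
  have "0 \<le> (norm (y + - (t *\<^sub>C x)))\<^sup>2" by simp
  also have "\<dots> = (norm y)\<^sup>2 + (cmod t)\<^sup>2 * (norm x)\<^sup>2 - 2 * Re (t * cinner y x)"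
    using norm_add_sq[of y "- (t *\<^sub>C x)"]
    by (simp only: norm_minus_cancel cinner_minus_right cinner_scaleC_right norm_scaleC power_mult_distrib Re_complex_div_eq_0) simp
  also have "cinner y x = cnj c" by (simp add: c_def cinner_conj_sym[of y x])
  also have "t * cnj c = complex_of_real ((cmod c)\<^sup>2 / (norm x)\<^sup>2)"
    using complex_norm_square[of c] by (simp add: t_def field_simps)
  also have "(cmod t)\<^sup>2 = (cmod c)\<^sup>2 / ((norm x)\<^sup>2)\<^sup>2"
    by (simp add: t_def norm_divide power_divide norm_power)
  finally have "0 \<le> (norm y)\<^sup>2 - (cmod c)\<^sup>2 / (norm x)\<^sup>2"
    using nx by (simp add: power2_eq_square field_simps)
  hence "(cmod c)\<^sup>2 \<le> (norm x * norm y)\<^sup>2"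
    using nx by (simp add: field_simps power_mult_distrib)
  thus ?thesis unfolding c_def using power2_le_imp_le by (metis mult_nonneg_nonneg norm_ge_zero)
qed

lemma parallelogram: "(norm (x - y::'a::chilbert))\<^sup>2 = 2 * (norm x)\<^sup>2 + 2 * (norm y)\<^sup>2 - (norm (x + y))\<^sup>2"
proof -
  have "(norm (x + - y))\<^sup>2 = (norm x)\<^sup>2 + (norm (-y))\<^sup>2 + 2 * Re (cinner x (-y))" by (rule norm_add_sq)
  moreover have "(norm (x + y))\<^sup>2 = (norm x)\<^sup>2 + (norm y)\<^sup>2 + 2 * Re (cinner x y)" by (rule norm_add_sq)
  ultimately show ?thesis by (simp add: cinner_minus_right)
qed

lemma riesz:
  fixes \<phi> :: "'a::chilbert \<Rightarrow> complex"
  assumes add: "\<And>x y. \<phi> (x + y) = \<phi> x + \<phi> y"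
    and hom: "\<And>c x. \<phi> (c *\<^sub>C x) = c * \<phi> x"
    and bnd: "\<And>x. cmod (\<phi> x) \<le> K * norm x"
  shows "\<exists>y. \<forall>x. \<phi> x = cinner y x"
proof (cases "\<forall>x. \<phi> x = 0")
  case True then show ?thesis by (intro exI[of _ 0]) simp
next
  case False
  then obtain x0 where x0: "\<phi> x0 \<noteq> 0" by blast
  have phi0: "\<phi> 0 = 0" using add[of 0 0] by simp
  have diff: "\<phi> (x - y) = \<phi> x - \<phi> y" for x y
    using add[of y "x - y"] by simp
  have homR: "\<phi> (r *\<^sub>R x) = complex_of_real r * \<phi> x" for r x
    by (simp add: scaleR_scaleC hom)
  define M where "M = {x. \<phi> x = 1}"
  have x1M: "(1 / \<phi> x0) *\<^sub>C x0 \<in> M" using x0 by (simp add: M_def hom)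
  define d2 where "d2 = Inf ((\<lambda>x. (norm x)\<^sup>2) ` M)"
  have bdd: "bdd_below ((\<lambda>x. (norm x)\<^sup>2) ` M)" by (rule bdd_belowI[of _ 0]) auto
  have lower: "d2 \<le> (norm x)\<^sup>2" if "x \<in> M" for x
    unfolding d2_def using bdd that by (auto intro: cInf_lower)
  have "\<exists>x. x \<in> M \<and> (norm x)\<^sup>2 < d2 + inverse (real (Suc k))" for k
  proof -
    have "d2 < d2 + inverse (real (Suc k))" by simp
    then obtain v where "v \<in> (\<lambda>x. (norm x)\<^sup>2) ` M" "v < d2 + inverse (real (Suc k))"
      unfolding d2_def using x1M by (metis cInf_lessD empty_iff image_is_empty)
    thus ?thesis by auto
  qed
  then obtain xs where xsM: "\<And>k. xs k \<in> M" and xsn: "\<And>k. (norm (xs k))\<^sup>2 < d2 + inverse (real (Suc k))"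
    by metis
  have midM: "(1/2::real) *\<^sub>R (x + y) \<in> M" if "x \<in> M" "y \<in> M" for x y
    using that by (simp add: M_def homR add)
  have dist_bound: "(norm (xs j - xs k))\<^sup>2 \<le> 2 * inverse (real (Suc j)) + 2 * inverse (real (Suc k))" for j k
  proof -
    have "d2 \<le> (norm ((1/2::real) *\<^sub>R (xs j + xs k)))\<^sup>2" by (rule lower[OF midM[OF xsM xsM]])
    also have "\<dots> = (norm (xs j + xs k))\<^sup>2 / 4" by (simp add: power_mult_distrib power2_eq_square)
    finally have "4 * d2 \<le> (norm (xs j + xs k))\<^sup>2" by simp
    thus ?thesis using parallelogram[of "xs j" "xs k"] xsn[of j] xsn[of k] by linarith
  qed
  have "Cauchy xs"
  proof (rule metric_CauchyI)
    fix e :: real assume e: "0 < e"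
    obtain N where N: "inverse (real (Suc N)) < e\<^sup>2 / 4"
      using e by (metis reals_Archimedean zero_less_divide_iff zero_less_numeral zero_less_power)
    show "\<exists>N. \<forall>m\<ge>N. \<forall>n\<ge>N. dist (xs m) (xs n) < e"
    proof (intro exI allI impI)
      fix m n assume mn: "N \<le> m" "N \<le> n"
      have "inverse (real (Suc m)) \<le> inverse (real (Suc N))" "inverse (real (Suc n)) \<le> inverse (real (Suc N))"
        using mn by (auto intro!: le_imp_inverse_le)
      hence "(norm (xs m - xs n))\<^sup>2 < e\<^sup>2"
        using dist_bound[of m n] N by linarith
      thus "dist (xs m) (xs n) < e" using e by (simp add: dist_norm power_less_imp_less_base)
    qed
  qed
  then obtain u where lim: "xs \<longlonglongrightarrow> u" using Cauchy_convergent_iff convergent_def by blast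
  have "(\<lambda>k. xs k - u) \<longlonglongrightarrow> 0" using lim by (simp add: LIM_zero)
  hence "(\<lambda>k. K * norm (xs k - u)) \<longlonglongrightarrow> 0" by (metis tendsto_mult_right_zero tendsto_norm_zero)
  moreover have "cmod (1 - \<phi> u) \<le> K * norm (xs k - u)" for k
    using bnd[of "xs k - u"] xsM[of k] by (simp add: diff M_def)
  ultimately have "cmod (1 - \<phi> u) \<le> 0"
    by (intro LIMSEQ_le[OF tendsto_const]) auto
  hence uM: "u \<in> M" by (simp add: M_def)
  have "(\<lambda>k. (norm (xs k))\<^sup>2) \<longlonglongrightarrow> (norm u)\<^sup>2" using lim by (intro tendsto_intros)
  moreover have "(\<lambda>k. d2 + inverse (real (Suc k))) \<longlonglongrightarrow> d2 + 0"
    by (intro tendsto_intros LIMSEQ_inverse_real_of_nat)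
  ultimately have unorm: "(norm u)\<^sup>2 \<le> d2"
    using xsn by (intro LIMSEQ_le) (auto intro: less_imp_le)
  have orth: "cinner u v = 0" if "\<phi> v = 0" for v
  proof (rule ccontr)
    define c where "c = cinner u v"
    assume "cinner u v \<noteq> 0"
    hence c0: "cmod c > 0" by (simp add: c_def)
    define \<epsilon> where "\<epsilon> = 1 / ((norm v)\<^sup>2 + 1)"
    have e0: "\<epsilon> > 0" unfolding \<epsilon>_def by (smt (verit) zero_le_power2 divide_pos_pos)
    have ev: "\<epsilon> * (norm v)\<^sup>2 < 1"
    proof -
      have "(norm v)\<^sup>2 < (norm v)\<^sup>2 + 1" by simp
      moreover have "(norm v)\<^sup>2 + 1 > 0" by (metis add_nonneg_pos zero_le_power2 zero_less_one)
      ultimately show ?thesis unfolding \<epsilon>_def by (simp add: divide_less_eq)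
    qed
    define t where "t = - (complex_of_real \<epsilon> * cnj c)"
    have "u + t *\<^sub>C v \<in> M" using uM that by (simp add: M_def add hom)
    hence "d2 \<le> (norm (u + t *\<^sub>C v))\<^sup>2" by (rule lower)
    also have "\<dots> = (norm u)\<^sup>2 + (cmod t)\<^sup>2 * (norm v)\<^sup>2 + 2 * Re (t * c)"
      by (simp add: norm_add_sq cinner_scaleC_right norm_scaleC power_mult_distrib c_def)
    also have "t * c = - complex_of_real (\<epsilon> * (cmod c)\<^sup>2)"
      using complex_norm_square[of c] by (simp add: t_def mult.commute mult.left_commute)
    also have "(cmod t)\<^sup>2 = \<epsilon>\<^sup>2 * (cmod c)\<^sup>2" using e0 by (simp add: t_def norm_mult power_mult_distrib)
    finally have "d2 \<le> (norm u)\<^sup>2 + \<epsilon> * (cmod c)\<^sup>2 * (\<epsilon> * (norm v)\<^sup>2) - 2 * (\<epsilon> * (cmod c)\<^sup>2)"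
      by (simp add: power2_eq_square algebra_simps)
    moreover have "\<epsilon> * (cmod c)\<^sup>2 * (\<epsilon> * (norm v)\<^sup>2) \<le> \<epsilon> * (cmod c)\<^sup>2 * 1"
      using ev e0 by (intro mult_left_mono) auto
    moreover have "\<epsilon> * (cmod c)\<^sup>2 > 0" using e0 c0 by simp
    ultimately show False using unorm by linarith
  qed
  have u0: "u \<noteq> 0" using uM phi0 by (auto simp: M_def)
  show ?thesis
  proof (intro exI allI)
    fix x
    have "\<phi> (x - \<phi> x *\<^sub>C u) = 0" using uM by (simp add: diff hom M_def)
    hence "cinner u (x - \<phi> x *\<^sub>C u) = 0" by (rule orth)
    hence "cinner u x = \<phi> x * complex_of_real ((norm u)\<^sup>2)"
      by (simp add: cinner_diff_right cinner_scaleC_right cinner_self_norm)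
    thus "\<phi> x = cinner (complex_of_real (1 / (norm u)\<^sup>2) *\<^sub>C u) x"
      using u0 by (simp add: cinner_scaleC_left)
  qed
qed

lemma bopD:
  assumes "bop T"
  shows "T (x + y) = T x + T y" "T (c *\<^sub>C x) = c *\<^sub>C T x"
  using assms unfolding bop_def by auto

lemma bop_bounded_linear: assumes "bop (T::'a::cnormed \<Rightarrow> 'a)" shows "bounded_linear T"
proof -
  from assms obtain K where K: "\<And>x. norm (T x) \<le> norm x * K" unfolding bop_def by blast
  show ?thesis
  proof (rule bounded_linear_intro[of _ K])
    show "T (x + y) = T x + T y" for x y using bopD[OF assms] by simp
    show "T (r *\<^sub>R x) = r *\<^sub>R T x" for r x using bopD[OF assms] by (simp add: scaleR_scaleC)
  qed (rule K)
qed

lemma bop_scale: assumes "bop T" shows "bop (\<lambda>x. c *\<^sub>C T x)"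
proof -
  from assms obtain K where K: "\<And>x. norm (T x) \<le> norm x * K" unfolding bop_def by blast
  have "norm (c *\<^sub>C T x) \<le> norm x * (cmod c * K)" for x
    using mult_left_mono[OF K[of x], of "cmod c"] by (simp add: norm_scaleC mult_ac)
  hence "\<exists>K. \<forall>x. norm (c *\<^sub>C T x) \<le> norm x * K" by blast
  moreover have "\<forall>c' x. c *\<^sub>C T (c' *\<^sub>C x) = c' *\<^sub>C (c *\<^sub>C T x)"
    using bopD[OF assms] by (simp add: scaleC_scaleC mult.commute)
  ultimately show ?thesis using bopD[OF assms] unfolding bop_def
    by (simp add: scaleC_add_right)
qed

lemma bop_zero: "bop (\<lambda>x. 0::'a::cnormed)"
  unfolding bop_def by (auto intro!: exI[of _ 0])

lemma bop_bound: assumes "bop T" shows "norm (T x) \<le> onorm T * norm x"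
  by (rule onorm[OF bop_bounded_linear[OF assms]])

lemma onorm_scale_real: assumes "bop T"
  shows "onorm (\<lambda>x. complex_of_real r *\<^sub>C T x) = \<bar>r\<bar> * onorm T"
  using onorm_scaleR[OF bop_bounded_linear[OF assms], of r] by (simp add: scaleC_of_real)

lemma adj_unique:
  assumes "\<forall>x y. cinner (T x) y = cinner x (S y)"
  shows "adj (T::'a::chilbert \<Rightarrow> 'a) = S"
proof -
  have P: "\<forall>x y. cinner (T x) y = cinner x (adj T y)"
    unfolding adj_def by (rule someI[of _ S]) (rule assms)
  show ?thesis
  proof
    fix y
    have "cinner x (adj T y - S y) = 0" for x using P assms by (simp add: cinner_diff_right)
    hence "cinner (adj T y - S y) (adj T y - S y) = 0" by blast
    thus "adj T y = S y" by (simp add: cinner_self_eq_0)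
  qed
qed

lemma adj_exists:
  assumes "bop (T::'a::chilbert \<Rightarrow> 'a)"
  shows "\<forall>x y. cinner (T x) y = cinner x (adj T y)"
proof -
  have "\<exists>z. \<forall>x. cinner y (T x) = cinner z x" for y
  proof (rule riesz)
    show "cinner y (T (x + x')) = cinner y (T x) + cinner y (T x')" for x x'
      by (simp add: bopD[OF assms] cinner_add_right)
    show "cinner y (T (c *\<^sub>C x)) = c * cinner y (T x)" for c x
      by (simp add: bopD[OF assms] cinner_scaleC_right)
    show "cmod (cinner y (T x)) \<le> (norm y * onorm T) * norm x" for x
    proof -
      have "norm y * norm (T x) \<le> norm y * (onorm T * norm x)"
        using bop_bound[OF assms, of x] by (simp add: mult_left_mono)
      thus ?thesis using cauchy_schwarz[of y "T x"] by (simp add: mult.assoc)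
    qed
  qed
  then obtain S where S: "\<And>y x. cinner y (T x) = cinner (S y) x" by metis
  have "\<forall>x y. cinner (T x) y = cinner x (S y)"
    by (metis S cinner_conj_sym)
  thus ?thesis using adj_unique by metis
qed

lemma adj_bound:
  assumes "bop (T::'a::chilbert \<Rightarrow> 'a)"
  shows "norm (adj T y) \<le> onorm T * norm y"
proof (cases "adj T y = 0")
  case True then show ?thesis using onorm_pos_le[OF bop_bounded_linear[OF assms]] by simp
next
  case False
  have "(norm (adj T y))\<^sup>2 = Re (cinner (adj T y) (adj T y))" by (rule norm_sq_cinner)
  also have "\<dots> = Re (cinner (T (adj T y)) y)" using adj_exists[OF assms] by simp
  also have "\<dots> \<le> cmod (cinner (T (adj T y)) y)" by (rule complex_Re_le_cmod)
  also have "\<dots> \<le> norm (T (adj T y)) * norm y" by (rule cauchy_schwarz)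
  also have "\<dots> \<le> onorm T * norm (adj T y) * norm y"
    using bop_bound[OF assms] by (simp add: mult_right_mono)
  finally have "norm (adj T y) * norm (adj T y) \<le> (onorm T * norm y) * norm (adj T y)"
    by (simp add: power2_eq_square mult_ac)
  thus ?thesis using False by simp
qed

lemma adj_scale:
  assumes "bop (T::'a::chilbert \<Rightarrow> 'a)"
  shows "adj (\<lambda>x. c *\<^sub>C T x) = (\<lambda>y. cnj c *\<^sub>C adj T y)"
  by (rule adj_unique) (simp add: cinner_scaleC_left cinner_scaleC_right adj_exists[OF assms])

lemma adj_zero: "adj (\<lambda>x::'a::chilbert. 0) = (\<lambda>y. 0)"
  by (rule adj_unique) simp

lemma U_zero: assumes "op_linear U" shows "U (\<lambda>x. 0) = 0"
proof -
  have "U (\<lambda>x. (0::'a) + 0) = U (\<lambda>x. 0) + U (\<lambda>x. 0)"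
    using assms bop_zero unfolding op_linear_def by blast
  thus ?thesis by simp
qed

lemma U_scale: assumes "op_linear U" "bop T" shows "U (\<lambda>x. c *\<^sub>C T x) = c *\<^sub>C U T"
  using assms unfolding op_linear_def by auto

lemma op_norm_bdd:
  assumes "op_bounded (U::('a::cnormed \<Rightarrow> 'a) \<Rightarrow> 'y::cnormed)"
  shows "bdd_above ((\<lambda>T. norm (U T)) ` {T. bop T \<and> onorm T \<le> 1})"
proof -
  from assms obtain K where K: "\<And>T. bop T \<Longrightarrow> norm (U T) \<le> K * onorm T" unfolding op_bounded_def by blast
  have "norm (U T) \<le> max K 0" if "bop T" "onorm T \<le> 1" for T
  proof -
    have "0 \<le> onorm T" using onorm_pos_le[OF bop_bounded_linear[OF that(1)]] .
    have "K * onorm T \<le> max K 0"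
    proof (cases "K \<ge> 0")
      case True then show ?thesis using mult_left_mono[OF that(2) True] by simp
    next
      case False then show ?thesis using \<open>0 \<le> onorm T\<close> by (simp add: mult_nonpos_nonneg)
    qed
    thus ?thesis using K[OF that(1)] by linarith
  qed
  thus ?thesis by (intro bdd_aboveI[of _ "max K 0"]) auto
qed

lemma op_norm_nonneg:
  assumes "op_linear U" "op_bounded U"
  shows "0 \<le> op_norm (U::('a::cnormed \<Rightarrow> 'a) \<Rightarrow> 'y::cnormed)"
proof -
  have "norm (U (\<lambda>x. 0)) \<le> op_norm U"
    unfolding op_norm_def by (rule cSUP_upper[OF _ op_norm_bdd[OF assms(2)]]) (simp add: bop_zero onorm_zero)
  thus ?thesis using U_zero[OF assms(1)] by simp
qed

lemma op_norm_bound: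
  assumes "op_linear U" "op_bounded U" "bop T"
  shows "norm (U T) \<le> op_norm (U::('a::cnormed \<Rightarrow> 'a) \<Rightarrow> 'y::cnormed) * onorm T"
proof (cases "onorm T = 0")
  case True
  hence "T = (\<lambda>x. 0)" using onorm_eq_0[OF bop_bounded_linear[OF assms(3)]] by auto
  then show ?thesis using U_zero[OF assms(1)] by (simp add: onorm_zero)
next
  case False
  have pos: "onorm T > 0" using False onorm_pos_le[OF bop_bounded_linear[OF assms(3)]] by simp
  define T' where "T' = (\<lambda>x. complex_of_real (1 / onorm T) *\<^sub>C T x)"
  have bT': "bop T'" unfolding T'_def by (rule bop_scale[OF assms(3)])
  have oT': "onorm T' = 1" unfolding T'_def using onorm_scale_real[OF assms(3), of "1 / onorm T"] pos by simp
  have "norm (U T') \<le> op_norm U"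
    unfolding op_norm_def by (rule cSUP_upper[OF _ op_norm_bdd[OF assms(2)]]) (simp add: bT' oT')
  moreover have "norm (U T') = norm (U T) / onorm T"
    unfolding T'_def using U_scale[OF assms(1,3)] pos by (simp add: norm_scaleC norm_divide)
  ultimately show ?thesis using pos by (simp add: divide_le_eq)
qed

definition deg :: "nat \<Rightarrow> (nat \<Rightarrow> nat) \<Rightarrow> nat" where "deg n \<alpha> = (\<Sum>i<n. \<alpha> i)"
definition fib :: "nat \<Rightarrow> nat \<Rightarrow> (nat \<Rightarrow> nat) set" where "fib n k = {\<alpha> \<in> multi_idx n. deg n \<alpha> = k}"
fun mc :: "nat \<Rightarrow> (nat \<Rightarrow> nat) \<Rightarrow> nat" where
  "mc 0 \<alpha> = 1"
| "mc (Suc n) \<alpha> = (deg (Suc n) \<alpha> choose \<alpha> n) * mc n \<alpha>"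

lemma fib_finite: "finite (fib n k)"
proof (rule finite_subset)
  show "fib n k \<subseteq> {f. \<forall>x. (x \<in> {..<n} \<longrightarrow> f x \<in> {..k}) \<and> (x \<notin> {..<n} \<longrightarrow> f x = 0)}"
  proof
    fix \<alpha> assume "\<alpha> \<in> fib n k"
    hence h: "\<forall>i\<ge>n. \<alpha> i = 0" "(\<Sum>i<n. \<alpha> i) = k" by (auto simp: fib_def multi_idx_def deg_def)
    have "\<alpha> x \<le> k" if "x < n" for x
      using h(2) member_le_sum[of x "{..<n}" \<alpha>] that by auto
    thus "\<alpha> \<in> {f. \<forall>x. (x \<in> {..<n} \<longrightarrow> f x \<in> {..k}) \<and> (x \<notin> {..<n} \<longrightarrow> f x = 0)}"
      using h(1) by auto
  qed
  show "finite {f. \<forall>x. (x \<in> {..<n} \<longrightarrow> f x \<in> {..k}) \<and> (x \<notin> {..<n} \<longrightarrow> (f::nat\<Rightarrow>nat) x = 0)}"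
    by (rule finite_set_of_finite_funs) auto
qed

lemma deg_upd: "m \<ge> n \<Longrightarrow> deg n (\<alpha>(m := j)) = deg n \<alpha>"
  unfolding deg_def by (intro sum.cong) auto

lemma mc_upd: "m \<ge> n \<Longrightarrow> mc n (\<alpha>(m := j)) = mc n \<alpha>"
  by (induction n) (auto simp: deg_upd)

lemma mpow_upd: "m \<ge> n \<Longrightarrow> mpow n w (\<alpha>(m := j)) = mpow n w \<alpha>"
  unfolding mpow_def by (intro prod.cong) auto

lemma mpow_Suc: "mpow (Suc n) w \<alpha> = mpow n w \<alpha> * w n ^ \<alpha> n"
  unfolding mpow_def by simp

lemma deg_Suc: "deg (Suc n) \<alpha> = deg n \<alpha> + \<alpha> n"
  unfolding deg_def by simp

lemma multinomial:
  fixes w :: "nat \<Rightarrow> 'b::comm_ring_1"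
  shows "(\<Sum>\<alpha>\<in>fib n k. of_nat (mc n \<alpha>) * mpow n w \<alpha>) = (\<Sum>i<n. w i) ^ k"
proof (induction n arbitrary: k)
  case 0
  have "fib 0 k = (if k = 0 then {\<lambda>_. 0} else {})"
    by (auto simp: fib_def multi_idx_def deg_def)
  then show ?case by (simp add: mpow_def power_0_left)
next
  case (Suc n)
  define S where "S = (\<Sum>i<n. w i)"
  have "(\<Sum>\<alpha>\<in>fib (Suc n) k. of_nat (mc (Suc n) \<alpha>) * mpow (Suc n) w \<alpha>)
      = (\<Sum>(j,\<beta>)\<in>Sigma {..k} (\<lambda>j. fib n (k - j)). of_nat (mc (Suc n) (\<beta>(n:=j))) * mpow (Suc n) w (\<beta>(n:=j)))"
  proof (rule sum.reindex_bij_witness[of _ "\<lambda>(j,\<beta>). \<beta>(n:=j)" "\<lambda>\<alpha>. (\<alpha> n, \<alpha>(n:=0))"])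
    fix \<alpha> assume a: "\<alpha> \<in> fib (Suc n) k"
    show "(case (\<alpha> n, \<alpha>(n := 0)) of (j, \<beta>) \<Rightarrow> \<beta>(n := j)) = \<alpha>" by simp
    have "deg n (\<alpha>(n:=0)) = deg n \<alpha>" by (rule deg_upd) simp
    with a show "(\<alpha> n, \<alpha>(n := 0)) \<in> Sigma {..k} (\<lambda>j. fib n (k - j))"
      by (auto simp: fib_def multi_idx_def deg_Suc)
    show "(case (\<alpha> n, \<alpha>(n := 0)) of (j, \<beta>) \<Rightarrow> of_nat (mc (Suc n) (\<beta>(n := j))) * mpow (Suc n) w (\<beta>(n := j)))
        = of_nat (mc (Suc n) \<alpha>) * mpow (Suc n) w \<alpha>" by simp
  next
    fix b assume b: "b \<in> Sigma {..k} (\<lambda>j. fib n (k - j))"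
    obtain j \<beta> where b': "b = (j, \<beta>)" "j \<le> k" "\<beta> \<in> fib n (k - j)" using b by auto
    have \<beta>n: "\<beta> n = 0" using b'(3) by (auto simp: fib_def multi_idx_def)
    show "(case (case b of (j, \<beta>) \<Rightarrow> \<beta>(n := j)) of \<alpha> \<Rightarrow> (\<alpha> n, \<alpha>(n := 0))) = b"
      using b' \<beta>n by auto
    have "deg n (\<beta>(n:=j)) = deg n \<beta>" by (rule deg_upd) simp
    thus "(case b of (j, \<beta>) \<Rightarrow> \<beta>(n := j)) \<in> fib (Suc n) k"
      using b' by (auto simp: fib_def multi_idx_def deg_Suc)
  qed
  also have "\<dots> = (\<Sum>j\<le>k. \<Sum>\<beta>\<in>fib n (k - j). of_nat (mc (Suc n) (\<beta>(n:=j))) * mpow (Suc n) w (\<beta>(n:=j)))"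
    by (rule sum.Sigma[symmetric]) (auto simp: fib_finite)
  also have "\<dots> = (\<Sum>j\<le>k. of_nat (k choose j) * w n ^ j * S ^ (k - j))"
  proof (rule sum.cong[OF refl])
    fix j assume j: "j \<in> {..k}"
    have "(\<Sum>\<beta>\<in>fib n (k - j). of_nat (mc (Suc n) (\<beta>(n:=j))) * mpow (Suc n) w (\<beta>(n:=j)))
        = (\<Sum>\<beta>\<in>fib n (k - j). (of_nat (k choose j) * w n ^ j) * (of_nat (mc n \<beta>) * mpow n w \<beta>))"
    proof (rule sum.cong[OF refl])
      fix \<beta> assume "\<beta> \<in> fib n (k - j)"
      hence "deg n \<beta> = k - j" by (simp add: fib_def)
      hence "deg (Suc n) (\<beta>(n:=j)) = k" using j deg_upd[of n n \<beta> j] by (simp add: deg_Suc)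
      thus "of_nat (mc (Suc n) (\<beta>(n:=j))) * mpow (Suc n) w (\<beta>(n:=j))
          = (of_nat (k choose j) * w n ^ j) * (of_nat (mc n \<beta>) * mpow n w \<beta>)"
        by (simp add: mc_upd mpow_upd mpow_Suc mult_ac)
    qed
    also have "\<dots> = of_nat (k choose j) * w n ^ j * S ^ (k - j)"
      by (simp add: sum_distrib_left[symmetric] Suc.IH S_def)
    finally show "(\<Sum>\<beta>\<in>fib n (k - j). of_nat (mc (Suc n) (\<beta>(n:=j))) * mpow (Suc n) w (\<beta>(n:=j)))
        = of_nat (k choose j) * w n ^ j * S ^ (k - j)" .
  qed
  also have "\<dots> = (w n + S) ^ k" by (rule binomial_ring[symmetric])
  also have "\<dots> = (\<Sum>i<Suc n. w i) ^ k" by (simp add: S_def add.commute)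
  finally show ?case .
qed

lemma regroup_has_sum:
  fixes g :: "(nat \<Rightarrow> nat) \<Rightarrow> 'v::real_normed_vector"
  assumes "(g has_sum S) (multi_idx n)"
  shows "((\<lambda>k. \<Sum>\<alpha>\<in>fib n k. g \<alpha>) has_sum S) UNIV"
proof -
  have "((\<lambda>(k,\<alpha>). g \<alpha>) has_sum S) (Sigma UNIV (fib n))"
  proof -
    have "(g has_sum S) (multi_idx n) = ((\<lambda>(k,\<alpha>). g \<alpha>) has_sum S) (Sigma UNIV (fib n))"
      by (rule has_sum_reindex_bij_witness[of _ snd "\<lambda>\<alpha>. (deg n \<alpha>, \<alpha>)"]) (auto simp: fib_def)
    thus ?thesis using assms by simp
  qed
  thus ?thesis
    by (rule has_sum_Sigma[OF isUCont_plus, where f="\<lambda>(k,\<alpha>). g \<alpha>"]) (auto simp: fib_finite)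
qed

lemma fib_memD: "\<alpha> \<in> fib n k \<Longrightarrow> \<alpha> \<in> multi_idx n" by (simp add: fib_def)

lemma fib_disj: "k \<noteq> j \<Longrightarrow> fib n k \<inter> fib n j = {}" by (auto simp: fib_def)

lemma regroup_summable_nonneg:
  fixes g :: "(nat \<Rightarrow> nat) \<Rightarrow> real"
  assumes nn: "\<And>\<alpha>. \<alpha> \<in> multi_idx n \<Longrightarrow> g \<alpha> \<ge> 0"
    and sm: "(\<lambda>k. \<Sum>\<alpha>\<in>fib n k. g \<alpha>) summable_on UNIV"
  shows "g summable_on multi_idx n"
proof (rule nonneg_bdd_above_summable_on[OF nn])
  show "bdd_above (sum g ` {F. F \<subseteq> multi_idx n \<and> finite F})"
  proof (rule bdd_aboveI2)
    fix F assume F: "F \<in> {F. F \<subseteq> multi_idx n \<and> finite F}"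
    define D where "D = deg n ` F"
    have fD: "finite D" using F by (simp add: D_def)
    have sub: "F \<subseteq> (\<Union>k\<in>D. fib n k)" using F by (auto simp: D_def fib_def)
    have "sum g F \<le> sum g (\<Union>k\<in>D. fib n k)"
      by (rule sum_mono2) (use fD sub F in \<open>auto simp: fib_finite intro: nn fib_memD\<close>)
    also have "\<dots> = (\<Sum>k\<in>D. \<Sum>\<alpha>\<in>fib n k. g \<alpha>)"
      by (rule sum.UNION_disjoint) (use fD fib_finite fib_disj in \<open>auto\<close>)
    also have "\<dots> \<le> (\<Sum>\<^sub>\<infinity>k\<in>UNIV. \<Sum>\<alpha>\<in>fib n k. g \<alpha>)"
      by (rule finite_sum_le_infsum[OF sm fD]) (auto intro!: sum_nonneg nn simp: fib_def)
    finally show "sum g F \<le> (\<Sum>\<^sub>\<infinity>k\<in>UNIV. \<Sum>\<alpha>\<in>fib n k. g \<alpha>)" .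
  qed
qed

definition e1 :: "nat \<Rightarrow> (nat \<Rightarrow> nat)" where "e1 k = (\<lambda>i. if i = 0 then k else 0)"

lemma e1_in: "n \<ge> 1 \<Longrightarrow> e1 k \<in> multi_idx n" unfolding e1_def multi_idx_def by simp
lemma e1_0: "e1 0 = (\<lambda>_. 0)" unfolding e1_def by simp
lemma e1_app0[simp]: "e1 k 0 = k" by (simp add: e1_def)
lemma e1_inj: "e1 k = e1 j \<longleftrightarrow> k = j" by (metis e1_app0)
lemma e1_of: "\<alpha> \<in> multi_idx 1 \<Longrightarrow> e1 (\<alpha> 0) = \<alpha>"
  unfolding e1_def multi_idx_def by (rule ext) simp

lemma has_sum_N1:
  "(g has_sum S) (multi_idx 1) \<longleftrightarrow> ((\<lambda>k. g (e1 k)) has_sum S) UNIV"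
proof (rule has_sum_reindex_bij_witness[of _ e1 "\<lambda>\<alpha>. \<alpha> 0"])
  show "\<And>a. a \<in> multi_idx 1 \<Longrightarrow> e1 (a 0) = a" by (rule e1_of)
  show "\<And>b. b \<in> UNIV \<Longrightarrow> e1 b \<in> multi_idx 1" by (rule e1_in) simp
  show "\<And>a. a \<in> multi_idx 1 \<Longrightarrow> g (e1 (a 0)) = g a" by (simp add: e1_of)
  show "\<And>a. a \<in> multi_idx 1 \<Longrightarrow> a 0 \<in> UNIV" by simp
  show "\<And>b. b \<in> UNIV \<Longrightarrow> e1 b 0 = b" by simp
qed simp

lemma summable_N1:
  "g summable_on (multi_idx 1) \<longleftrightarrow> (\<lambda>k. g (e1 k)) summable_on UNIV"
  unfolding summable_on_def by (simp only: has_sum_N1)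

lemma infsum_N1:
  "infsum g (multi_idx 1) = (\<Sum>\<^sub>\<infinity>k. g (e1 k))"
proof (cases "g summable_on (multi_idx 1)")
  case True
  hence "(g has_sum infsum g (multi_idx 1)) (multi_idx 1)" by (rule has_sum_infsum)
  hence "((\<lambda>k. g (e1 k)) has_sum infsum g (multi_idx 1)) UNIV" by (simp only: has_sum_N1)
  then show ?thesis by (rule infsumI[symmetric])
next
  case False
  have "\<not> (\<lambda>k. g (e1 k)) summable_on UNIV" using False unfolding summable_N1 .
  then have "(\<Sum>\<^sub>\<infinity>k. g (e1 k)) = 0" by (rule infsum_not_exists)
  moreover have "infsum g (multi_idx 1) = 0" using False by (rule infsum_not_exists)
  ultimately show ?thesis by simp
qed

lemma mpow_1: "mpow 1 z \<alpha> = z 0 ^ \<alpha> 0" by (simp add: mpow_def)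

lemma norm_mpow: "norm (mpow n z \<alpha>) = mpow n (\<lambda>i. norm (z i)) \<alpha>"
  for z :: "nat \<Rightarrow> 'a::{comm_ring_1,real_normed_field}"
  by (simp add: mpow_def prod_norm[symmetric] norm_power)

lemma mpow_nonneg: "(\<And>i. i < n \<Longrightarrow> r i \<ge> 0) \<Longrightarrow> mpow n r \<alpha> \<ge> (0::real)"
  unfolding mpow_def by (intro prod_nonneg) simp

lemma mpow_zero: "\<alpha> \<in> multi_idx n \<Longrightarrow> mpow n (\<lambda>_. 0::'a::comm_ring_1) \<alpha> = (if \<alpha> = (\<lambda>_. 0) then 1 else 0)"
proof -
  assume a: "\<alpha> \<in> multi_idx n"
  show ?thesis
  proof (cases "\<alpha> = (\<lambda>_. 0)")
    case True then show ?thesis by (simp add: mpow_def)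
  next
    case False
    then obtain i where i: "\<alpha> i \<noteq> 0" by auto
    have z: "\<forall>j\<ge>n. \<alpha> j = 0" using a by (simp add: multi_idx_def)
    have "i < n" using z i by (meson not_less)
    have "(0::'a) ^ \<alpha> i = 0" using i by (simp add: power_0_left)
    hence "(\<Prod>i<n. (0::'a) ^ \<alpha> i) = 0"
      using \<open>i < n\<close> by (intro prod_zero bexI[of _ i]) auto
    thus ?thesis using False by (simp add: mpow_def)
  qed
qed

lemma nn_sum_le_cong:
  assumes "\<And>\<alpha>. \<alpha> \<in> A \<Longrightarrow> g \<alpha> = g' \<alpha>"
  shows "nn_sum_le g A C \<longleftrightarrow> nn_sum_le g' A C"
  unfolding nn_sum_le_def using assms summable_on_cong[of A g g'] infsum_cong[of A g g'] by simp

lemma mpow_N1: assumes "n \<ge> 1" "\<alpha> \<in> multi_idx 1" shows "mpow n z \<alpha> = mpow 1 z \<alpha>"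
proof -
  have "mpow n z \<alpha> = (\<Prod>i<n. if i = 0 then z 0 ^ \<alpha> 0 else 1)"
    unfolding mpow_def using assms(2) by (intro prod.cong) (auto simp: multi_idx_def)
  also have "\<dots> = z 0 ^ \<alpha> 0" using assms(1) by (simp add: prod.delta)
  finally show ?thesis unfolding mpow_1 .
qed

lemma mpow_vanish:
  fixes z :: "nat \<Rightarrow> 'a::comm_ring_1"
  assumes "\<forall>i\<ge>1. z i = 0" "\<alpha> \<in> multi_idx n" "\<alpha> \<notin> multi_idx 1"
  shows "mpow n z \<alpha> = 0"
proof -
  obtain i where i: "i \<ge> 1" "\<alpha> i \<noteq> 0" using assms(3) by (auto simp: multi_idx_def)
  have z: "\<forall>j\<ge>n. \<alpha> j = 0" using assms(2) by (simp add: multi_idx_def)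
  have "i < n" using z i by (meson not_less)
  have "z i ^ \<alpha> i = 0" using i assms(1) by (simp add: power_0_left)
  hence "(\<Prod>i<n. z i ^ \<alpha> i) = 0"
    using \<open>i < n\<close> by (intro prod_zero bexI[of _ i]) auto
  thus ?thesis by (simp add: mpow_def)
qed

lemma zero_idx_in: "(\<lambda>_. 0) \<in> multi_idx n" by (simp add: multi_idx_def)

lemma ph_eval_zero:
  assumes "b (\<lambda>_. 0) = (\<lambda>x. 0)"
  shows "ph_eval n a b (\<lambda>_. 0) = (a (\<lambda>_. 0) :: 'h::chilbert \<Rightarrow> 'h)"
proof
  fix x
  have "ph_eval n a b (\<lambda>_. 0) x = infsum (\<lambda>\<alpha>. mpow n (\<lambda>_. 0) \<alpha> *\<^sub>C a \<alpha> x + cnj (mpow n (\<lambda>_. 0) \<alpha>) *\<^sub>C adj (b \<alpha>) x) {\<lambda>_. 0}"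
    unfolding ph_eval_def by (rule infsum_cong_neutral) (auto simp: mpow_zero zero_idx_in)
  also have "\<dots> = a (\<lambda>_. 0) x" using assms by (simp add: mpow_def adj_zero scaleC_one)
  finally show "ph_eval n a b (\<lambda>_. 0) x = a (\<lambda>_. 0) x" .
qed

lemma ph_norm_upper:
  assumes "ph_series n \<Omega> a b" "z \<in> \<Omega>"
  shows "onorm (ph_eval n a b z :: 'h::chilbert \<Rightarrow> 'h) \<le> ph_norm n \<Omega> a b"
  unfolding ph_norm_def by (rule cSUP_upper[OF assms(2)]) (use assms(1) in \<open>simp add: ph_series_def\<close>)

lemma zero_ineq:
  fixes U :: "('h::chilbert \<Rightarrow> 'h) \<Rightarrow> 'y::cnormed"
  assumes ser: "ph_series n \<Omega> a b" and z0: "(\<lambda>_. 0) \<in> \<Omega>"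
    and UL: "op_linear U" and UB: "op_bounded U" and lam: "op_norm U \<le> lam"
  shows "nn_sum_le (\<lambda>\<alpha>. (norm (U (a \<alpha>)) + norm (U (b \<alpha>))) * (if \<alpha> = (\<lambda>_. 0) then 1 else 0))
           (multi_idx n) (lam * ph_norm n \<Omega> a b)"
proof -
  let ?g = "\<lambda>\<alpha>. (norm (U (a \<alpha>)) + norm (U (b \<alpha>))) * (if \<alpha> = (\<lambda>_. 0) then 1 else (0::real))"
  have b0: "b (\<lambda>_. 0) = (\<lambda>x. 0)" and ba: "bop (a (\<lambda>_. 0))"
    using ser zero_idx_in[of n] by (auto simp: ph_series_def)
  have sm: "?g summable_on multi_idx n \<longleftrightarrow> ?g summable_on {\<lambda>_. 0}"
    by (rule summable_on_cong_neutral) (auto simp: zero_idx_in)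
  have isum: "infsum ?g (multi_idx n) = infsum ?g {\<lambda>_. 0}"
    by (rule infsum_cong_neutral) (auto simp: zero_idx_in)
  have "norm (U (a (\<lambda>_. 0))) \<le> op_norm U * onorm (a (\<lambda>_. 0))"
    by (rule op_norm_bound[OF UL UB ba])
  also have "\<dots> \<le> lam * onorm (a (\<lambda>_. 0))"
    using lam onorm_pos_le[OF bop_bounded_linear[OF ba]] by (intro mult_right_mono) auto
  also have "onorm (a (\<lambda>_. 0)) = onorm (ph_eval n a b (\<lambda>_. 0))" using ph_eval_zero[of b n a, OF b0] by simp
  also have "lam * \<dots> \<le> lam * ph_norm n \<Omega> a b"
    using op_norm_nonneg[OF UL UB] lam ph_norm_upper[OF ser z0] by (intro mult_left_mono) auto
  finally have "norm (U (a (\<lambda>_. 0))) \<le> lam * ph_norm n \<Omega> a b" .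
  thus ?thesis unfolding nn_sum_le_def using sm isum b0 U_zero[OF UL] by simp
qed

lemma N1_sub: "n \<ge> 1 \<Longrightarrow> multi_idx 1 \<subseteq> multi_idx n"
  unfolding multi_idx_def by auto

lemma disc_sub_ball: assumes "n \<ge> 1" shows "unit_disc \<subseteq> ball_l1 n"
proof
  fix \<zeta> assume z: "\<zeta> \<in> unit_disc"
  hence z0: "\<forall>i\<ge>1. \<zeta> i = 0" "cmod (\<zeta> 0) < 1" by (auto simp: unit_disc_def)
  have "(\<Sum>i<n. cmod (\<zeta> i)) = (\<Sum>i<n. if i = 0 then cmod (\<zeta> 0) else 0)"
    using z0(1) by (intro sum.cong) auto
  also have "\<dots> = cmod (\<zeta> 0)" using assms by (simp add: sum.delta)
  finally show "\<zeta> \<in> ball_l1 n" using z0 assms unfolding ball_l1_def by auto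
qed

lemma ne_disc: "unit_disc \<noteq> {}"
proof -
  have "(\<lambda>_. 0) \<in> unit_disc" by (simp add: unit_disc_def)
  thus ?thesis by blast
qed

lemma ph_eval_restrict:
  assumes "n \<ge> 1" "\<zeta> \<in> unit_disc"
  shows "ph_eval 1 a b \<zeta> = (ph_eval n a b \<zeta> :: 'h::chilbert \<Rightarrow> 'h)"
proof
  fix x
  have z0: "\<forall>i\<ge>1. \<zeta> i = 0" using assms(2) by (simp add: unit_disc_def)
  show "ph_eval 1 a b \<zeta> x = ph_eval n a b \<zeta> x"
    unfolding ph_eval_def
  proof (rule infsum_cong_neutral)
    fix \<alpha> assume "\<alpha> \<in> multi_idx n - multi_idx 1"
    hence "mpow n \<zeta> \<alpha> = 0" using mpow_vanish[OF z0] by blast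
    thus "mpow n \<zeta> \<alpha> *\<^sub>C a \<alpha> x + cnj (mpow n \<zeta> \<alpha>) *\<^sub>C adj (b \<alpha>) x = 0" by simp
  next
    fix \<alpha> assume "\<alpha> \<in> multi_idx 1 - multi_idx n"
    thus "mpow 1 \<zeta> \<alpha> *\<^sub>C a \<alpha> x + cnj (mpow 1 \<zeta> \<alpha>) *\<^sub>C adj (b \<alpha>) x = 0"
      using N1_sub[OF assms(1)] by blast
  next
    fix \<alpha> assume "\<alpha> \<in> multi_idx 1 \<inter> multi_idx n"
    thus "mpow 1 \<zeta> \<alpha> *\<^sub>C a \<alpha> x + cnj (mpow 1 \<zeta> \<alpha>) *\<^sub>C adj (b \<alpha>) x
        = mpow n \<zeta> \<alpha> *\<^sub>C a \<alpha> x + cnj (mpow n \<zeta> \<alpha>) *\<^sub>C adj (b \<alpha>) x"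
      using mpow_N1[OF assms(1), of \<alpha> \<zeta>] by simp
  qed
qed

lemma restrict_series:
  assumes n: "n \<ge> 1" and ser: "ph_series n (ball_l1 n) a (b :: (nat \<Rightarrow> nat) \<Rightarrow> 'h::chilbert \<Rightarrow> 'h)"
  shows "ph_series 1 unit_disc a b" "ph_norm 1 unit_disc a b \<le> ph_norm n (ball_l1 n) a b"
proof -
  have sub: "unit_disc \<subseteq> ball_l1 n" by (rule disc_sub_ball[OF n])
  have bdd: "bdd_above ((\<lambda>z. onorm (ph_eval n a b z :: 'h \<Rightarrow> 'h)) ` ball_l1 n)"
    using ser by (simp add: ph_series_def)
  have "(\<lambda>z. onorm (ph_eval 1 a b z :: 'h \<Rightarrow> 'h)) ` unit_disc \<subseteq> (\<lambda>z. onorm (ph_eval n a b z :: 'h \<Rightarrow> 'h)) ` ball_l1 n"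
    using sub ph_eval_restrict[OF n, where a=a and b=b] by auto
  hence bdd1: "bdd_above ((\<lambda>z. onorm (ph_eval 1 a b z :: 'h \<Rightarrow> 'h)) ` unit_disc)"
    by (rule bdd_above_mono[OF bdd])
  have summ: "(\<lambda>\<alpha>. (onorm (a \<alpha>) + onorm (b \<alpha>)) * norm (mpow 1 z \<alpha>)) summable_on multi_idx 1"
    if z: "z \<in> unit_disc" for z
  proof -
    have "(\<lambda>\<alpha>. (onorm (a \<alpha>) + onorm (b \<alpha>)) * norm (mpow n z \<alpha>)) summable_on multi_idx n"
      using ser z sub by (auto simp: ph_series_def)
    hence "(\<lambda>\<alpha>. (onorm (a \<alpha>) + onorm (b \<alpha>)) * norm (mpow n z \<alpha>)) summable_on multi_idx 1"
      by (rule summable_on_subset_banach) (rule N1_sub[OF n])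
    thus ?thesis
      by (rule summable_on_cong[THEN iffD1, rotated]) (simp add: mpow_N1[OF n])
  qed
  show "ph_series 1 unit_disc a b"
    using ser summ bdd1 N1_sub[OF n] unfolding ph_series_def by blast
  show "ph_norm 1 unit_disc a b \<le> ph_norm n (ball_l1 n) a b"
    unfolding ph_norm_def
    by (rule cSUP_subset_mono[OF ne_disc bdd sub]) (metis ph_eval_restrict[OF n] order_refl)
qed

definition Radm :: "real \<Rightarrow> (('h::chilbert \<Rightarrow> 'h) \<Rightarrow> 'y::cnormed) \<Rightarrow> real \<Rightarrow> bool" where
  "Radm lam U s \<longleftrightarrow> s \<ge> 0 \<and> (\<forall>a b. ph_series 1 unit_disc a b \<longrightarrow>
        (\<forall>z\<in>scale_set s unit_disc.
           nn_sum_le (\<lambda>\<alpha>. (norm (U (a \<alpha>)) + norm (U (b \<alpha>))) * norm (mpow 1 z \<alpha>))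
             (multi_idx 1) (lam * ph_norm 1 unit_disc a b)))"

definition Aadm :: "real \<Rightarrow> nat \<Rightarrow> (('h::chilbert \<Rightarrow> 'h) \<Rightarrow> 'y::cnormed) \<Rightarrow> (nat \<Rightarrow> real) \<Rightarrow> bool" where
  "Aadm lam n U r \<longleftrightarrow> (\<forall>i<n. r i \<ge> 0) \<and>
     (\<forall>a b. ph_series n (ball_l1 n) a b \<longrightarrow>
        nn_sum_le (\<lambda>\<alpha>. (norm (U (a \<alpha>)) + norm (U (b \<alpha>))) * mpow n r \<alpha>)
          (multi_idx n) (lam * ph_norm n (ball_l1 n) a b))"

lemma mpow_Suc0: "mpow (Suc 0) z \<alpha> = z 0 ^ \<alpha> 0" by (simp add: mpow_def)

lemma point_adm:
  fixes U :: "('h::chilbert \<Rightarrow> 'h) \<Rightarrow> 'y::cnormed"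
  assumes n: "n \<ge> 1" and lam: "lam \<ge> 0" and R: "Radm lam U s" and t: "0 \<le> t" "t < s"
  shows "Aadm lam n U (\<lambda>i. if i = 0 then t else 0)"
  unfolding Aadm_def
proof (intro conjI allI impI)
  fix i show "0 \<le> (if i = 0 then t else 0)" using t by simp
next
  fix a b :: "(nat \<Rightarrow> nat) \<Rightarrow> 'h \<Rightarrow> 'h"
  assume ser: "ph_series n (ball_l1 n) a b"
  let ?C = "\<lambda>\<alpha>. norm (U (a \<alpha>)) + norm (U (b \<alpha>))"
  define r where "r = (\<lambda>i::nat. if i = 0 then t else 0)"
  define z where "z = (\<lambda>i::nat. if i = 0 then complex_of_real t else 0)"
  have s0: "s > 0" using t by simp
  have zin: "z \<in> scale_set s unit_disc"
  proof -
    define w where "w = (\<lambda>i::nat. if i = 0 then complex_of_real (t / s) else 0)"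
    have "cmod (complex_of_real (t / s)) = t / s" using t s0 by (simp only: norm_of_real abs_of_nonneg divide_nonneg_pos)
    also have "\<dots> < 1" using t s0 by simp
    finally have "w \<in> unit_disc" by (simp add: w_def unit_disc_def del: of_real_divide)
    moreover have "z = (\<lambda>i. complex_of_real s * w i)"
      using s0 by (auto simp: z_def w_def)
    ultimately show ?thesis unfolding scale_set_def by blast
  qed
  have ser1: "ph_series 1 unit_disc a b" and pn: "ph_norm 1 unit_disc a b \<le> ph_norm n (ball_l1 n) a b"
    using restrict_series[OF n ser] by auto
  have nn1: "nn_sum_le (\<lambda>\<alpha>. ?C \<alpha> * norm (mpow 1 z \<alpha>)) (multi_idx 1) (lam * ph_norm 1 unit_disc a b)"
    using R ser1 zin unfolding Radm_def by blast
  have eq1: "?C \<alpha> * mpow n r \<alpha> = ?C \<alpha> * norm (mpow 1 z \<alpha>)" if "\<alpha> \<in> multi_idx 1" for \<alpha>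
  proof -
    have "mpow n r \<alpha> = r 0 ^ \<alpha> 0" using mpow_N1[OF n that] by (simp add: mpow_1 mpow_Suc0)
    moreover have "norm (mpow 1 z \<alpha>) = t ^ \<alpha> 0" using t by (simp add: mpow_1 mpow_Suc0 z_def norm_power)
    ultimately show ?thesis by (simp add: r_def)
  qed
  have r0: "\<forall>i\<ge>1. r i = 0" by (simp add: r_def)
  have eq0: "?C \<alpha> * mpow n r \<alpha> = 0" if "\<alpha> \<in> multi_idx n - multi_idx 1" for \<alpha>
    using mpow_vanish[OF r0, of \<alpha> n] that by simp
  have sm: "(\<lambda>\<alpha>. ?C \<alpha> * mpow n r \<alpha>) summable_on multi_idx n \<longleftrightarrow> (\<lambda>\<alpha>. ?C \<alpha> * norm (mpow 1 z \<alpha>)) summable_on multi_idx 1"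
    by (rule summable_on_cong_neutral) (use eq0 eq1 N1_sub[OF n] in auto)
  have su: "infsum (\<lambda>\<alpha>. ?C \<alpha> * mpow n r \<alpha>) (multi_idx n) = infsum (\<lambda>\<alpha>. ?C \<alpha> * norm (mpow 1 z \<alpha>)) (multi_idx 1)"
    by (rule infsum_cong_neutral) (use eq0 eq1 N1_sub[OF n] in auto)
  have "lam * ph_norm 1 unit_disc a b \<le> lam * ph_norm n (ball_l1 n) a b"
    using pn lam by (rule mult_left_mono)
  thus "nn_sum_le (\<lambda>\<alpha>. ?C \<alpha> * mpow n (\<lambda>i. if i = 0 then t else 0) \<alpha>) (multi_idx n) (lam * ph_norm n (ball_l1 n) a b)"
    using nn1 sm su unfolding nn_sum_le_def r_def by simp
qed

definition lift :: "nat \<Rightarrow> ((nat \<Rightarrow> nat) \<Rightarrow> 'h::cnormed \<Rightarrow> 'h) \<Rightarrow> (nat \<Rightarrow> nat) \<Rightarrow> 'h \<Rightarrow> 'h" where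
  "lift n a \<alpha> = (\<lambda>x. (of_nat (mc n \<alpha>) :: complex) *\<^sub>C a (e1 (deg n \<alpha>)) x)"

lemma ser_bop1:
  assumes "ph_series 1 unit_disc a b"
  shows "bop (a (e1 k))" "bop (b (e1 k))"
  using assms e1_in[of 1 k] by (auto simp: ph_series_def)

lemma lift_bop: assumes "bop (a (e1 (deg n \<alpha>)))" shows "bop (lift n a \<alpha>)"
  unfolding lift_def by (rule bop_scale[OF assms])

lemma onorm_lift: assumes "bop (a (e1 (deg n \<alpha>)))"
  shows "onorm (lift n a \<alpha>) = real (mc n \<alpha>) * onorm (a (e1 (deg n \<alpha>)))"
  using onorm_scale_real[OF assms, of "real (mc n \<alpha>)"] unfolding lift_def by simp

lemma lift_zero: assumes "b (\<lambda>_. 0) = (\<lambda>x. 0)" shows "lift n b (\<lambda>_. 0) = (\<lambda>x. 0)"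
proof -
  have "deg n (\<lambda>_. 0) = 0" by (simp add: deg_def)
  thus ?thesis using assms unfolding lift_def by (simp add: e1_0)
qed

lemma multinomial_real:
  "(\<Sum>\<alpha>\<in>fib n k. real (mc n \<alpha>) * mpow n w \<alpha>) = (\<Sum>i<n. w i) ^ k"
  using multinomial[where n=n and k=k and w=w] by simp

lemma multinomial_complex:
  "(\<Sum>\<alpha>\<in>fib n k. (of_nat (mc n \<alpha>) :: complex) * mpow n w \<alpha>) = (\<Sum>i<n. w i) ^ k"
  using multinomial[where n=n and k=k and w=w] by simp

lemma lift_at:
  fixes a b :: "(nat \<Rightarrow> nat) \<Rightarrow> 'h::chilbert \<Rightarrow> 'h"
  assumes n: "n \<ge> 1" and ser: "ph_series 1 unit_disc a b" and w: "w \<in> ball_l1 n"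
  shows "(\<lambda>\<alpha>. (onorm (lift n a \<alpha>) + onorm (lift n b \<alpha>)) * norm (mpow n w \<alpha>)) summable_on multi_idx n"
    and "ph_eval n (lift n a) (lift n b) w = ph_eval 1 a b (\<lambda>i. if i = 0 then (\<Sum>j<n. w j) else 0)"
proof -
  define t where "t = (\<Sum>i<n. cmod (w i))"
  define wa where "wa = (\<lambda>i. cmod (w i))"
  define h where "h = (\<lambda>k. onorm (a (e1 k)) + onorm (b (e1 k)))"
  have t1: "t < 1" using w by (simp add: ball_l1_def t_def)
  have t0: "t \<ge> 0" unfolding t_def by (simp add: sum_nonneg)
  have h0: "h k \<ge> 0" for k
    unfolding h_def using onorm_pos_le[OF bop_bounded_linear[OF ser_bop1(1)[OF ser]]]
      onorm_pos_le[OF bop_bounded_linear[OF ser_bop1(2)[OF ser]]] by (simp add: add_nonneg_nonneg)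
  define P where "P = (\<lambda>i::nat. if i = 0 then complex_of_real t else 0)"
  have PD: "P \<in> unit_disc" using t0 t1 by (simp add: P_def unit_disc_def)
  have "(\<lambda>\<alpha>. (onorm (a \<alpha>) + onorm (b \<alpha>)) * norm (mpow 1 P \<alpha>)) summable_on multi_idx 1"
    using ser PD by (simp add: ph_series_def)
  hence "(\<lambda>k. (onorm (a (e1 k)) + onorm (b (e1 k))) * norm (mpow 1 P (e1 k))) summable_on UNIV"
    by (simp only: summable_N1)
  moreover have "norm (mpow 1 P (e1 k)) = t ^ k" for k
    using t0 by (simp add: mpow_1 mpow_Suc0 P_def norm_power)
  ultimately have hs: "(\<lambda>k. h k * t ^ k) summable_on UNIV" by (simp add: h_def)
  have fibsum: "(\<Sum>\<alpha>\<in>fib n k. h (deg n \<alpha>) * (real (mc n \<alpha>) * mpow n wa \<alpha>)) = h k * t ^ k" for k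
  proof -
    have "(\<Sum>\<alpha>\<in>fib n k. h (deg n \<alpha>) * (real (mc n \<alpha>) * mpow n wa \<alpha>))
        = (\<Sum>\<alpha>\<in>fib n k. h k * (real (mc n \<alpha>) * mpow n wa \<alpha>))"
      by (intro sum.cong) (auto simp: fib_def)
    also have "\<dots> = h k * t ^ k"
      by (simp add: sum_distrib_left[symmetric] multinomial_real t_def wa_def)
    finally show ?thesis .
  qed
  have term_eq: "(onorm (lift n a \<alpha>) + onorm (lift n b \<alpha>)) * norm (mpow n w \<alpha>)
      = h (deg n \<alpha>) * (real (mc n \<alpha>) * mpow n wa \<alpha>)" for \<alpha>
    using onorm_lift[of a n \<alpha>, OF ser_bop1(1)[OF ser]] onorm_lift[of b n \<alpha>, OF ser_bop1(2)[OF ser]]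
    by (simp add: h_def norm_mpow wa_def algebra_simps)
  have gsum: "(\<lambda>\<alpha>. h (deg n \<alpha>) * (real (mc n \<alpha>) * mpow n wa \<alpha>)) summable_on multi_idx n"
  proof (rule regroup_summable_nonneg)
    show "0 \<le> h (deg n \<alpha>) * (real (mc n \<alpha>) * mpow n wa \<alpha>)" for \<alpha>
      using h0 mpow_nonneg[of n wa \<alpha>] by (simp add: wa_def)
    show "(\<lambda>k. \<Sum>\<alpha>\<in>fib n k. h (deg n \<alpha>) * (real (mc n \<alpha>) * mpow n wa \<alpha>)) summable_on UNIV"
      using hs by (simp add: fibsum)
  qed
  thus "(\<lambda>\<alpha>. (onorm (lift n a \<alpha>) + onorm (lift n b \<alpha>)) * norm (mpow n w \<alpha>)) summable_on multi_idx n"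
    by (simp add: term_eq)
  show "ph_eval n (lift n a) (lift n b) w = ph_eval 1 a b (\<lambda>i. if i = 0 then (\<Sum>j<n. w j) else 0)"
  proof
    fix x
    define \<zeta> where "\<zeta> = (\<Sum>j<n. w j)"
    define ak where "ak = (\<lambda>k. a (e1 k) x)"
    define ck where "ck = (\<lambda>k. adj (b (e1 k)) x)"
    define m where "m = (\<lambda>\<alpha>. (of_nat (mc n \<alpha>) :: complex) * mpow n w \<alpha>)"
    define g where "g = (\<lambda>\<alpha>. mpow n w \<alpha> *\<^sub>C lift n a \<alpha> x + cnj (mpow n w \<alpha>) *\<^sub>C adj (lift n b \<alpha>) x)"
    have g_eq: "g \<alpha> = m \<alpha> *\<^sub>C ak (deg n \<alpha>) + cnj (m \<alpha>) *\<^sub>C ck (deg n \<alpha>)" for \<alpha>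
    proof -
      have "adj (lift n b \<alpha>) = (\<lambda>y. cnj (of_nat (mc n \<alpha>)) *\<^sub>C adj (b (e1 (deg n \<alpha>))) y)"
        unfolding lift_def by (rule adj_scale[OF ser_bop1(2)[OF ser]])
      thus ?thesis unfolding g_def m_def ak_def ck_def lift_def
        by (simp add: scaleC_scaleC mult.commute)
    qed
    have gnorm: "norm (g \<alpha>) \<le> h (deg n \<alpha>) * (real (mc n \<alpha>) * mpow n wa \<alpha>) * norm x" for \<alpha>
    proof -
      have cm: "cmod (m \<alpha>) = real (mc n \<alpha>) * mpow n wa \<alpha>"
        by (simp add: m_def norm_mult norm_mpow wa_def)
      have "norm (g \<alpha>) \<le> cmod (m \<alpha>) * norm (ak (deg n \<alpha>)) + cmod (m \<alpha>) * norm (ck (deg n \<alpha>))"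
        unfolding g_eq using norm_triangle_ineq[of "m \<alpha> *\<^sub>C ak (deg n \<alpha>)" "cnj (m \<alpha>) *\<^sub>C ck (deg n \<alpha>)"]
        by (simp add: norm_scaleC)
      also have "\<dots> \<le> cmod (m \<alpha>) * (onorm (a (e1 (deg n \<alpha>))) * norm x) + cmod (m \<alpha>) * (onorm (b (e1 (deg n \<alpha>))) * norm x)"
        unfolding ak_def ck_def
        by (intro add_mono mult_left_mono bop_bound adj_bound ser_bop1[OF ser]) auto
      also have "\<dots> = h (deg n \<alpha>) * (real (mc n \<alpha>) * mpow n wa \<alpha>) * norm x"
        by (simp add: cm h_def algebra_simps)
      finally show ?thesis .
    qed
    have Fnn: "0 \<le> h (deg n \<alpha>) * (real (mc n \<alpha>) * mpow n wa \<alpha>) * norm x" for \<alpha>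
      using h0 mpow_nonneg[of n wa \<alpha>] by (simp add: wa_def)
    have "(\<lambda>\<alpha>. h (deg n \<alpha>) * (real (mc n \<alpha>) * mpow n wa \<alpha>) * norm x) summable_on multi_idx n"
      by (rule summable_on_cmult_left[OF gsum])
    hence "(\<lambda>\<alpha>. norm (g \<alpha>)) summable_on multi_idx n"
      by (rule Infinite_Sum.abs_summable_on_comparison_test') (rule gnorm)
    hence "g summable_on multi_idx n" by (rule abs_summable_summable)
    hence "(g has_sum infsum g (multi_idx n)) (multi_idx n)" by (rule has_sum_infsum)
    hence hs2: "((\<lambda>k. \<Sum>\<alpha>\<in>fib n k. g \<alpha>) has_sum infsum g (multi_idx n)) UNIV"
      by (rule regroup_has_sum)
    have fib_g: "(\<Sum>\<alpha>\<in>fib n k. g \<alpha>) = (\<zeta> ^ k) *\<^sub>C ak k + cnj (\<zeta> ^ k) *\<^sub>C ck k" for k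
    proof -
      have "(\<Sum>\<alpha>\<in>fib n k. g \<alpha>) = (\<Sum>\<alpha>\<in>fib n k. m \<alpha> *\<^sub>C ak k + cnj (m \<alpha>) *\<^sub>C ck k)"
        by (intro sum.cong) (auto simp: g_eq fib_def)
      also have "\<dots> = (\<Sum>\<alpha>\<in>fib n k. m \<alpha>) *\<^sub>C ak k + cnj (\<Sum>\<alpha>\<in>fib n k. m \<alpha>) *\<^sub>C ck k"
        by (simp add: sum.distrib scaleC_sum_left)
      also have "(\<Sum>\<alpha>\<in>fib n k. m \<alpha>) = \<zeta> ^ k"
        unfolding m_def \<zeta>_def by (rule multinomial_complex)
      finally show ?thesis .
    qed
    define Z where "Z = (\<lambda>i::nat. if i = 0 then \<zeta> else 0)"
    have "ph_eval 1 a b Z x = infsum (\<lambda>\<alpha>. mpow 1 Z \<alpha> *\<^sub>C a \<alpha> x + cnj (mpow 1 Z \<alpha>) *\<^sub>C adj (b \<alpha>) x) (multi_idx 1)"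
      unfolding ph_eval_def ..
    also have "\<dots> = (\<Sum>\<^sub>\<infinity>k. mpow 1 Z (e1 k) *\<^sub>C a (e1 k) x + cnj (mpow 1 Z (e1 k)) *\<^sub>C adj (b (e1 k)) x)"
      by (rule infsum_N1)
    also have "\<dots> = (\<Sum>\<^sub>\<infinity>k. (\<zeta> ^ k) *\<^sub>C ak k + cnj (\<zeta> ^ k) *\<^sub>C ck k)"
    proof (rule infsum_cong)
      fix k
      have "mpow 1 Z (e1 k) = \<zeta> ^ k" unfolding mpow_1 Z_def e1_app0 by simp
      thus "mpow 1 Z (e1 k) *\<^sub>C a (e1 k) x + cnj (mpow 1 Z (e1 k)) *\<^sub>C adj (b (e1 k)) x = (\<zeta> ^ k) *\<^sub>C ak k + cnj (\<zeta> ^ k) *\<^sub>C ck k"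
        unfolding ak_def ck_def by simp
    qed
    finally have "ph_eval 1 a b (\<lambda>i. if i = 0 then \<zeta> else 0) x
        = (\<Sum>\<^sub>\<infinity>k. (\<zeta> ^ k) *\<^sub>C ak k + cnj (\<zeta> ^ k) *\<^sub>C ck k)" unfolding Z_def .
    also have "(\<Sum>\<^sub>\<infinity>k. (\<zeta> ^ k) *\<^sub>C ak k + cnj (\<zeta> ^ k) *\<^sub>C ck k) = infsum g (multi_idx n)"
    proof -
      have "((\<lambda>k. (\<zeta> ^ k) *\<^sub>C ak k + cnj (\<zeta> ^ k) *\<^sub>C ck k) has_sum infsum g (multi_idx n)) UNIV"
        using hs2 by (simp only: fib_g)
      thus ?thesis by (rule infsumI)
    qed
    also have "\<dots> = ph_eval n (lift n a) (lift n b) w x"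
      unfolding ph_eval_def g_def ..
    finally have "ph_eval 1 a b (\<lambda>i. if i = 0 then \<zeta> else 0) x = ph_eval n (lift n a) (lift n b) w x" .
    thus "ph_eval n (lift n a) (lift n b) w x = ph_eval 1 a b (\<lambda>i. if i = 0 then (\<Sum>j<n. w j) else 0) x"
      unfolding \<zeta>_def by (rule sym)
  qed
qed

lemma zeta_in_disc:
  assumes "w \<in> ball_l1 n"
  shows "(\<lambda>i::nat. if i = 0 then (\<Sum>j<n. w j) else 0) \<in> unit_disc"
proof -
  have "cmod (\<Sum>j<n. w j) \<le> (\<Sum>j<n. cmod (w j))" by (rule norm_sum)
  also have "\<dots> < 1" using assms by (simp add: ball_l1_def)
  finally show ?thesis by (simp add: unit_disc_def)
qed

lemma zero_in_ball: "(\<lambda>_. 0) \<in> ball_l1 n" by (simp add: ball_l1_def)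
lemma zero_in_disc: "(\<lambda>_. 0) \<in> unit_disc" by (simp add: unit_disc_def)

lemma lift_series:
  fixes a b :: "(nat \<Rightarrow> nat) \<Rightarrow> 'h::chilbert \<Rightarrow> 'h"
  assumes n: "n \<ge> 1" and ser: "ph_series 1 unit_disc a b"
  shows "ph_series n (ball_l1 n) (lift n a) (lift n b)"
    and "ph_norm n (ball_l1 n) (lift n a) (lift n b) \<le> ph_norm 1 unit_disc a b"
proof -
  have b0: "b (\<lambda>_. 0) = (\<lambda>x. 0)" using ser by (simp add: ph_series_def)
  have bdd: "bdd_above ((\<lambda>z. onorm (ph_eval 1 a b z :: 'h \<Rightarrow> 'h)) ` unit_disc)"
    using ser by (simp add: ph_series_def)
  have img: "(\<lambda>w. onorm (ph_eval n (lift n a) (lift n b) w :: 'h \<Rightarrow> 'h)) ` ball_l1 n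
      \<subseteq> (\<lambda>z. onorm (ph_eval 1 a b z :: 'h \<Rightarrow> 'h)) ` unit_disc"
  proof
    fix y assume "y \<in> (\<lambda>w. onorm (ph_eval n (lift n a) (lift n b) w :: 'h \<Rightarrow> 'h)) ` ball_l1 n"
    then obtain w where w: "w \<in> ball_l1 n" "y = onorm (ph_eval n (lift n a) (lift n b) w)" by blast
    hence "y = onorm (ph_eval 1 a b (\<lambda>i. if i = 0 then (\<Sum>j<n. w j) else 0))"
      using lift_at(2)[OF n ser w(1)] by simp
    thus "y \<in> (\<lambda>z. onorm (ph_eval 1 a b z :: 'h \<Rightarrow> 'h)) ` unit_disc"
      using zeta_in_disc[OF w(1)] by blast
  qed
  show "ph_series n (ball_l1 n) (lift n a) (lift n b)"
    unfolding ph_series_def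
  proof (intro conjI ballI)
    fix \<alpha> show "bop (lift n a \<alpha>)" by (rule lift_bop[of a n \<alpha>, OF ser_bop1(1)[OF ser]])
    show "bop (lift n b \<alpha>)" by (rule lift_bop[of b n \<alpha>, OF ser_bop1(2)[OF ser]])
  next
    show "lift n b (\<lambda>_. 0) = (\<lambda>x. 0)" by (rule lift_zero[of b, OF b0])
  next
    fix w assume "w \<in> ball_l1 n"
    thus "(\<lambda>\<alpha>. (onorm (lift n a \<alpha>) + onorm (lift n b \<alpha>)) * norm (mpow n w \<alpha>)) summable_on multi_idx n"
      by (rule lift_at(1)[OF n ser])
  next
    show "bdd_above ((\<lambda>z. onorm (ph_eval n (lift n a) (lift n b) z :: 'h \<Rightarrow> 'h)) ` ball_l1 n)"
      by (rule bdd_above_mono[OF bdd img])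
  qed
  show "ph_norm n (ball_l1 n) (lift n a) (lift n b) \<le> ph_norm 1 unit_disc a b"
    unfolding ph_norm_def
  proof (rule cSUP_least)
    show "ball_l1 n \<noteq> {}" using zero_in_ball by blast
    fix w assume w: "w \<in> ball_l1 n"
    have "onorm (ph_eval n (lift n a) (lift n b) w :: 'h \<Rightarrow> 'h) = onorm (ph_eval 1 a b (\<lambda>i. if i = 0 then (\<Sum>j<n. w j) else 0))"
      using lift_at(2)[OF n ser w] by simp
    also have "\<dots> \<le> (SUP z\<in>unit_disc. onorm (ph_eval 1 a b z :: 'h \<Rightarrow> 'h))"
      by (rule cSUP_upper[OF zeta_in_disc[OF w] bdd])
    finally show "onorm (ph_eval n (lift n a) (lift n b) w :: 'h \<Rightarrow> 'h) \<le> (SUP z\<in>unit_disc. onorm (ph_eval 1 a b z :: 'h \<Rightarrow> 'h))" .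
  qed
qed

lemma norm_U_lift:
  assumes UL: "op_linear U" and b: "bop (a (e1 (deg n \<alpha>)))"
  shows "norm (U (lift n a \<alpha>)) = real (mc n \<alpha>) * norm (U (a (e1 (deg n \<alpha>))))"
proof -
  have "U (lift n a \<alpha>) = (of_nat (mc n \<alpha>) :: complex) *\<^sub>C U (a (e1 (deg n \<alpha>)))"
    unfolding lift_def by (rule U_scale[OF UL b])
  thus ?thesis by (simp add: norm_scaleC)
qed

lemma sum_adm:
  fixes U :: "('h::chilbert \<Rightarrow> 'h) \<Rightarrow> 'y::cnormed"
  assumes n: "n \<ge> 1" and UL: "op_linear U" and lam: "lam \<ge> 0" and A: "Aadm lam n U r"
  shows "Radm lam U (\<Sum>i<n. r i)"
  unfolding Radm_def
proof (intro conjI allI impI ballI)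
  define s where "s = (\<Sum>i<n. r i)"
  have r0: "\<forall>i<n. r i \<ge> 0" using A by (simp add: Aadm_def)
  show s0: "0 \<le> (\<Sum>i<n. r i)" using r0 by (intro sum_nonneg) simp
  fix a b :: "(nat \<Rightarrow> nat) \<Rightarrow> 'h \<Rightarrow> 'h" and z
  assume ser: "ph_series 1 unit_disc a b" and z: "z \<in> scale_set (\<Sum>i<n. r i) unit_disc"
  define Ck where "Ck = (\<lambda>k. norm (U (a (e1 k))) + norm (U (b (e1 k))))"
  have Ck0: "Ck k \<ge> 0" for k by (simp add: Ck_def)
  have sl: "ph_series n (ball_l1 n) (lift n a) (lift n b)"
    and nl: "ph_norm n (ball_l1 n) (lift n a) (lift n b) \<le> ph_norm 1 unit_disc a b"
    using lift_series[OF n ser] by auto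
  have nn: "nn_sum_le (\<lambda>\<alpha>. (norm (U (lift n a \<alpha>)) + norm (U (lift n b \<alpha>))) * mpow n r \<alpha>)
      (multi_idx n) (lam * ph_norm n (ball_l1 n) (lift n a) (lift n b))"
    using A sl by (simp add: Aadm_def)
  have teq: "(norm (U (lift n a \<alpha>)) + norm (U (lift n b \<alpha>))) * mpow n r \<alpha> = Ck (deg n \<alpha>) * (real (mc n \<alpha>) * mpow n r \<alpha>)" for \<alpha>
    using norm_U_lift[of U a n \<alpha>, OF UL ser_bop1(1)[OF ser]] norm_U_lift[of U b n \<alpha>, OF UL ser_bop1(2)[OF ser]]
    by (simp add: Ck_def algebra_simps)
  define X where "X = infsum (\<lambda>\<alpha>. Ck (deg n \<alpha>) * (real (mc n \<alpha>) * mpow n r \<alpha>)) (multi_idx n)"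
  have sumX: "(\<lambda>\<alpha>. Ck (deg n \<alpha>) * (real (mc n \<alpha>) * mpow n r \<alpha>)) summable_on multi_idx n"
    and Xle: "X \<le> lam * ph_norm n (ball_l1 n) (lift n a) (lift n b)"
    using nn unfolding nn_sum_le_def X_def teq by auto
  have "((\<lambda>\<alpha>. Ck (deg n \<alpha>) * (real (mc n \<alpha>) * mpow n r \<alpha>)) has_sum X) (multi_idx n)"
    unfolding X_def by (rule has_sum_infsum[OF sumX])
  hence "((\<lambda>k. \<Sum>\<alpha>\<in>fib n k. Ck (deg n \<alpha>) * (real (mc n \<alpha>) * mpow n r \<alpha>)) has_sum X) UNIV"
    by (rule regroup_has_sum)
  moreover have "(\<Sum>\<alpha>\<in>fib n k. Ck (deg n \<alpha>) * (real (mc n \<alpha>) * mpow n r \<alpha>)) = Ck k * s ^ k" for k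
  proof -
    have "(\<Sum>\<alpha>\<in>fib n k. Ck (deg n \<alpha>) * (real (mc n \<alpha>) * mpow n r \<alpha>)) = (\<Sum>\<alpha>\<in>fib n k. Ck k * (real (mc n \<alpha>) * mpow n r \<alpha>))"
      by (intro sum.cong) (auto simp: fib_def)
    also have "\<dots> = Ck k * s ^ k"
      by (simp add: sum_distrib_left[symmetric] multinomial_real s_def)
    finally show ?thesis .
  qed
  ultimately have hsX: "((\<lambda>k. Ck k * s ^ k) has_sum X) UNIV" by simp
  obtain v where v: "v \<in> unit_disc" "z = (\<lambda>i. complex_of_real s * v i)"
    using z unfolding scale_set_def s_def by blast
  have s0': "s \<ge> 0" using s0 by (simp add: s_def)
  have zs: "cmod (z 0) \<le> s"
  proof -
    have "cmod (z 0) = s * cmod (v 0)" using v(2) s0' by (simp add: norm_mult)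
    also have "\<dots> \<le> s * 1" using v(1) s0' by (intro mult_left_mono) (auto simp: unit_disc_def)
    finally show ?thesis by simp
  qed
  have fk: "(norm (U (a (e1 k))) + norm (U (b (e1 k)))) * norm (mpow 1 z (e1 k)) = Ck k * cmod (z 0) ^ k" for k
    by (simp add: Ck_def mpow_1 mpow_Suc0 norm_power)
  have le: "Ck k * cmod (z 0) ^ k \<le> Ck k * s ^ k" for k
    using zs by (intro mult_left_mono power_mono Ck0) auto
  have "(\<lambda>k. norm (Ck k * cmod (z 0) ^ k)) summable_on UNIV"
    by (rule Infinite_Sum.abs_summable_on_comparison_test'[OF has_sum_imp_summable[OF hsX]])
       (use le Ck0 in simp)
  hence sm: "(\<lambda>k. Ck k * cmod (z 0) ^ k) summable_on UNIV"
    using Ck0 by simp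
  have "(\<Sum>\<^sub>\<infinity>k. Ck k * cmod (z 0) ^ k) \<le> (\<Sum>\<^sub>\<infinity>k. Ck k * s ^ k)"
    by (rule infsum_mono[OF sm has_sum_imp_summable[OF hsX] le])
  also have "\<dots> = X" using hsX by (rule infsumI)
  also have "\<dots> \<le> lam * ph_norm 1 unit_disc a b"
    using Xle mult_left_mono[OF nl lam] by linarith
  finally have ile: "(\<Sum>\<^sub>\<infinity>k. Ck k * cmod (z 0) ^ k) \<le> lam * ph_norm 1 unit_disc a b" .
  show "nn_sum_le (\<lambda>\<alpha>. (norm (U (a \<alpha>)) + norm (U (b \<alpha>))) * norm (mpow 1 z \<alpha>)) (multi_idx 1) (lam * ph_norm 1 unit_disc a b)"
    unfolding nn_sum_le_def summable_N1 infsum_N1 fk using sm ile by simp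
qed

lemma point_in_scale:
  assumes t: "0 \<le> t" "t < s"
  shows "(\<lambda>i::nat. if i = 0 then complex_of_real t else 0) \<in> scale_set s unit_disc"
proof -
  have s0: "s > 0" using t by simp
  define w where "w = (\<lambda>i::nat. if i = 0 then complex_of_real (t / s) else 0)"
  have "cmod (complex_of_real (t / s)) = t / s" using t s0 by (simp only: norm_of_real abs_of_nonneg divide_nonneg_pos)
  also have "\<dots> < 1" using t s0 by simp
  finally have "w \<in> unit_disc" by (simp add: w_def unit_disc_def del: of_real_divide)
  moreover have "(\<lambda>i::nat. if i = 0 then complex_of_real t else 0) = (\<lambda>i. complex_of_real s * w i)"
    using s0 by (auto simp: w_def)
  ultimately show ?thesis unfolding scale_set_def by blast
qed

lemma Radm_bound:
  fixes U :: "('h::chilbert \<Rightarrow> 'h) \<Rightarrow> 'y::cnormed"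
  assumes UL: "op_linear U" and T: "bop T" and UT: "U T \<noteq> 0" and lam: "lam \<ge> 0" and R: "Radm lam U s"
  shows "s \<le> 2 * (lam * onorm T) / norm (U T)"
proof (cases "s = 0")
  case True
  have "0 \<le> onorm T" by (rule onorm_pos_le[OF bop_bounded_linear[OF T]])
  then show ?thesis using True lam by simp
next
  case False
  hence s0: "s > 0" using R by (simp add: Radm_def)
  define t where "t = s / 2"
  have t: "0 \<le> t" "t < s" using s0 by (auto simp: t_def)
  define a where "a = (\<lambda>\<alpha>::nat \<Rightarrow> nat. if \<alpha> = e1 1 then T else (\<lambda>x. 0))"
  define b where "b = (\<lambda>\<alpha>::nat \<Rightarrow> nat. (\<lambda>x::'h. 0::'h))"
  have e11: "e1 1 \<in> multi_idx 1" "e1 (Suc 0) \<in> multi_idx (Suc 0)" using e1_in[of 1 1] by simp_all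
  have eval: "ph_eval 1 a b z = (\<lambda>x. z 0 *\<^sub>C T x)" for z
  proof
    fix x
    have "ph_eval 1 a b z x = infsum (\<lambda>\<alpha>. mpow 1 z \<alpha> *\<^sub>C a \<alpha> x + cnj (mpow 1 z \<alpha>) *\<^sub>C adj (b \<alpha>) x) {e1 1}"
      unfolding ph_eval_def by (rule infsum_cong_neutral) (auto simp: a_def b_def adj_zero e11)
    also have "\<dots> = z 0 *\<^sub>C T x" by (simp add: a_def b_def adj_zero mpow_1 mpow_Suc0)
    finally show "ph_eval 1 a b z x = z 0 *\<^sub>C T x" .
  qed
  have onz: "onorm (ph_eval 1 a b z) \<le> onorm T" if "z \<in> unit_disc" for z
  proof -
    have z1: "cmod (z 0) \<le> 1" using that by (simp add: unit_disc_def)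
    have oT: "0 \<le> onorm T" by (rule onorm_pos_le[OF bop_bounded_linear[OF T]])
    have "onorm (\<lambda>x. z 0 *\<^sub>C T x) \<le> cmod (z 0) * onorm T"
    proof (rule onorm_bound)
      show "0 \<le> cmod (z 0) * onorm T" using oT by simp
      fix x show "norm (z 0 *\<^sub>C T x) \<le> cmod (z 0) * onorm T * norm x"
        using bop_bound[OF T, of x] by (simp add: norm_scaleC mult.assoc mult_left_mono)
    qed
    also have "\<dots> \<le> 1 * onorm T" using z1 oT by (intro mult_right_mono) auto
    finally show ?thesis unfolding eval by simp
  qed
  have ser: "ph_series 1 unit_disc a b"
    unfolding ph_series_def
  proof (intro conjI ballI)
    fix \<alpha> show "bop (a \<alpha>)" by (simp add: a_def T bop_zero)
    show "bop (b \<alpha>)" by (simp add: b_def bop_zero)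
  next
    show "b (\<lambda>_. 0) = (\<lambda>x. 0)" by (simp add: b_def)
  next
    fix z :: "nat \<Rightarrow> complex"
    have "(\<lambda>\<alpha>. (onorm (a \<alpha>) + onorm (b \<alpha>)) * norm (mpow 1 z \<alpha>)) summable_on multi_idx 1
        \<longleftrightarrow> (\<lambda>\<alpha>. (onorm (a \<alpha>) + onorm (b \<alpha>)) * norm (mpow 1 z \<alpha>)) summable_on {e1 1}"
      by (rule summable_on_cong_neutral) (auto simp: a_def b_def onorm_zero e11)
    thus "(\<lambda>\<alpha>. (onorm (a \<alpha>) + onorm (b \<alpha>)) * norm (mpow 1 z \<alpha>)) summable_on multi_idx 1" by simp
  next
    show "bdd_above ((\<lambda>z. onorm (ph_eval 1 a b z)) ` unit_disc)"
      using onz by (intro bdd_aboveI[of _ "onorm T"]) auto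
  qed
  have pn: "ph_norm 1 unit_disc a b \<le> onorm T"
    unfolding ph_norm_def by (rule cSUP_least[OF ne_disc onz])
  define z where "z = (\<lambda>i::nat. if i = 0 then complex_of_real t else 0)"
  have zin: "z \<in> scale_set s unit_disc" unfolding z_def by (rule point_in_scale[OF t])
  have nn: "nn_sum_le (\<lambda>\<alpha>. (norm (U (a \<alpha>)) + norm (U (b \<alpha>))) * norm (mpow 1 z \<alpha>)) (multi_idx 1) (lam * ph_norm 1 unit_disc a b)"
    using R ser zin unfolding Radm_def by blast
  have "infsum (\<lambda>\<alpha>. (norm (U (a \<alpha>)) + norm (U (b \<alpha>))) * norm (mpow 1 z \<alpha>)) (multi_idx 1)
      = infsum (\<lambda>\<alpha>. (norm (U (a \<alpha>)) + norm (U (b \<alpha>))) * norm (mpow 1 z \<alpha>)) {e1 1}"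
    by (rule infsum_cong_neutral) (auto simp: a_def b_def U_zero[OF UL] e11)
  also have "\<dots> = norm (U T) * t"
    using t by (simp add: a_def b_def U_zero[OF UL] mpow_1 mpow_Suc0 z_def)
  finally have "norm (U T) * t \<le> lam * ph_norm 1 unit_disc a b"
    using nn unfolding nn_sum_le_def by simp
  also have "\<dots> \<le> lam * onorm T" using pn lam by (rule mult_left_mono)
  finally have "norm (U T) * t \<le> lam * onorm T" .
  moreover have "norm (U T) > 0" using UT by simp
  ultimately show ?thesis by (simp add: t_def field_simps)
qed

lemma Radm_zero:
  fixes U :: "('h::chilbert \<Rightarrow> 'h) \<Rightarrow> 'y::cnormed"
  assumes UL: "op_linear U" and UB: "op_bounded U" and lamle: "op_norm U \<le> lam"
  shows "Radm lam U 0"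
proof -
  have "nn_sum_le (\<lambda>\<alpha>. (norm (U (a \<alpha>)) + norm (U (b \<alpha>))) * norm (mpow 1 z \<alpha>))
           (multi_idx 1) (lam * ph_norm 1 unit_disc a b)"
    if ser: "ph_series 1 unit_disc a b" and z: "z \<in> scale_set 0 unit_disc"
    for a b :: "(nat \<Rightarrow> nat) \<Rightarrow> 'h \<Rightarrow> 'h" and z
  proof -
    obtain w where "z = (\<lambda>i. complex_of_real 0 * w i)" using z unfolding scale_set_def by blast
    hence z0: "z = (\<lambda>_. 0)" by simp
    have zi: "nn_sum_le (\<lambda>\<alpha>. (norm (U (a \<alpha>)) + norm (U (b \<alpha>))) * (if \<alpha> = (\<lambda>_. 0) then 1 else 0))
           (multi_idx 1) (lam * ph_norm 1 unit_disc a b)"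
      by (rule zero_ineq[OF ser zero_in_disc UL UB lamle])
    have eq: "(norm (U (a \<alpha>)) + norm (U (b \<alpha>))) * norm (mpow 1 z \<alpha>)
        = (norm (U (a \<alpha>)) + norm (U (b \<alpha>))) * (if \<alpha> = (\<lambda>_. 0) then 1 else 0)" if "\<alpha> \<in> multi_idx 1" for \<alpha>
    proof -
      have "mpow 1 (\<lambda>_. 0::complex) \<alpha> = (if \<alpha> = (\<lambda>_. 0) then 1 else 0)" by (rule mpow_zero[OF that])
      thus ?thesis unfolding z0 by simp
    qed
    show ?thesis by (rule iffD2[OF nn_sum_le_cong[OF eq] zi])
  qed
  thus ?thesis unfolding Radm_def by simp
qed

lemma Aadm_zero:
  fixes U :: "('h::chilbert \<Rightarrow> 'h) \<Rightarrow> 'y::cnormed"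
  assumes UL: "op_linear U" and UB: "op_bounded U" and lamle: "op_norm U \<le> lam"
  shows "Aadm lam n U (\<lambda>_. 0)"
proof -
  have "nn_sum_le (\<lambda>\<alpha>. (norm (U (a \<alpha>)) + norm (U (b \<alpha>))) * mpow n (\<lambda>_. 0) \<alpha>)
           (multi_idx n) (lam * ph_norm n (ball_l1 n) a b)"
    if ser: "ph_series n (ball_l1 n) a b" for a b :: "(nat \<Rightarrow> nat) \<Rightarrow> 'h \<Rightarrow> 'h"
  proof -
    have zi: "nn_sum_le (\<lambda>\<alpha>. (norm (U (a \<alpha>)) + norm (U (b \<alpha>))) * (if \<alpha> = (\<lambda>_. 0) then 1 else 0))
         (multi_idx n) (lam * ph_norm n (ball_l1 n) a b)"
      by (rule zero_ineq[OF ser zero_in_ball UL UB lamle])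
    have eq: "(norm (U (a \<alpha>)) + norm (U (b \<alpha>))) * mpow n (\<lambda>_. 0) \<alpha>
        = (norm (U (a \<alpha>)) + norm (U (b \<alpha>))) * (if \<alpha> = (\<lambda>_. 0) then 1 else 0)" if "\<alpha> \<in> multi_idx n" for \<alpha>
    proof -
      have "mpow n (\<lambda>_. 0::real) \<alpha> = (if \<alpha> = (\<lambda>_. 0) then 1 else 0)" by (rule mpow_zero[OF that])
      thus ?thesis by simp
    qed
    show ?thesis by (rule iffD2[OF nn_sum_le_cong[OF eq] zi])
  qed
  thus ?thesis unfolding Aadm_def by simp
qed

theorem mainTheorem15:
  fixes U :: "('h::chilbert \<Rightarrow> 'h) \<Rightarrow> 'y::{cnormed,banach}"
    and lam :: real and n :: nat
  assumes "op_linear U" and "op_bounded U"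
    and "\<exists>T. bop T \<and> U T \<noteq> 0"
    and "op_norm U < lam"
    and "n \<ge> 1"
  shows "AP_lambda lam n (ball_l1 n) U = R_lambda lam 1 unit_disc U / real n"
proof -
  note UL = assms(1) and UB = assms(2) and n = assms(5)
  have lamle: "op_norm U \<le> lam" using assms(4) by simp
  have lam0: "lam \<ge> 0" using op_norm_nonneg[OF UL UB] assms(4) by linarith
  have npos: "real n > 0" using n by simp
  obtain T where T: "bop T" "U T \<noteq> 0" using assms(3) by blast
  define Sset where "Sset = {s. Radm lam U s}"
  define AP where "AP = {(\<Sum>i<n. r i) / real n | r. Aadm lam n U r}"
  have R_eq: "R_lambda lam 1 unit_disc U = Sup Sset"
    unfolding R_lambda_def Sset_def Radm_def ..
  have AP_eq: "AP_lambda lam n (ball_l1 n) U = Sup AP"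
    unfolding AP_lambda_def AP_def Aadm_def ..
  have S0: "0 \<in> Sset" unfolding Sset_def using Radm_zero[OF UL UB lamle] by simp
  have Sbdd: "bdd_above Sset"
    using Radm_bound[OF UL T(1) T(2) lam0] unfolding Sset_def by (intro bdd_aboveI) auto
  have A0: "0 \<in> AP"
  proof -
    have "Aadm lam n U (\<lambda>_. 0)" by (rule Aadm_zero[OF UL UB lamle])
    moreover have "(0::real) = (\<Sum>i<n. (\<lambda>_. 0::real) i) / real n" by simp
    ultimately have "\<exists>r. (0::real) = (\<Sum>i<n. r i) / real n \<and> Aadm lam n U r" by blast
    thus ?thesis unfolding AP_def by simp
  qed
  have AP_sub: "\<exists>s\<in>Sset. x = s / real n" if xin: "x \<in> AP" for x
  proof -
    obtain r where r: "x = (\<Sum>i<n. r i) / real n" "Aadm lam n U r" using xin[unfolded AP_def] by blast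
    have "(\<Sum>i<n. r i) \<in> Sset" unfolding Sset_def using sum_adm[OF n UL lam0 r(2)] by simp
    thus ?thesis using r(1) by blast
  qed
  have AP_in: "t / real n \<in> AP" if "s \<in> Sset" "0 \<le> t" "t < s" for s t
  proof -
    have "Aadm lam n U (\<lambda>i. if i = 0 then t else 0)"
      using point_adm[OF n lam0 _ that(2,3)] that(1) unfolding Sset_def by blast
    moreover have "(\<Sum>i<n. (\<lambda>i. if i = 0 then t else 0) i) = t" using n by (simp add: sum.delta)
    ultimately have "\<exists>r. t / real n = (\<Sum>i<n. r i) / real n \<and> Aadm lam n U r" by metis
    thus ?thesis unfolding AP_def by simp
  qed
  have APbdd: "bdd_above AP"
  proof (rule bdd_aboveI)
    fix x assume "x \<in> AP"
    then obtain s where s: "s \<in> Sset" "x = s / real n" using AP_sub by blast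
    have "s \<le> Sup Sset" by (rule cSup_upper[OF s(1) Sbdd])
    thus "x \<le> Sup Sset / real n" using s(2) npos by (simp add: divide_right_mono)
  qed
  have le1: "Sup AP \<le> Sup Sset / real n"
  proof (rule cSup_least)
    show "AP \<noteq> {}" using A0 by blast
    fix x assume "x \<in> AP"
    then obtain s where s: "s \<in> Sset" "x = s / real n" using AP_sub by blast
    have "s \<le> Sup Sset" by (rule cSup_upper[OF s(1) Sbdd])
    thus "x \<le> Sup Sset / real n" using s(2) npos by (simp add: divide_right_mono)
  qed
  have AP_nonneg: "0 \<le> Sup AP" by (rule cSup_upper[OF A0 APbdd])
  have le2: "Sup Sset \<le> real n * Sup AP"
  proof (rule cSup_least)
    show "Sset \<noteq> {}" using S0 by blast
    fix s assume s: "s \<in> Sset"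
    hence s0: "s \<ge> 0" unfolding Sset_def Radm_def by simp
    show "s \<le> real n * Sup AP"
    proof (cases "s = 0")
      case True then show ?thesis using AP_nonneg npos by simp
    next
      case False
      hence "0 < s" using s0 by simp
      thus ?thesis
      proof (rule dense_le_bounded)
        fix w assume w: "0 < w" "w < s"
        have "w / real n \<le> Sup AP" by (rule cSup_upper[OF AP_in[OF s _ w(2)] APbdd]) (use w in simp)
        thus "w \<le> real n * Sup AP" using npos by (simp add: divide_le_eq mult.commute)
      qed
    qed
  qed
  have "Sup Sset / real n \<le> Sup AP" using le2 npos by (simp add: divide_le_eq mult.commute)
  hence "Sup AP = Sup Sset / real n" using le1 by (rule antisym[rotated])
  thus ?thesis using AP_eq R_eq by simp
qed


end
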